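(* Let $\mathbb{K}$ be a field, $m<n$, and let $A\in\mathbb{K}[x]^{m\times n}$ have full rank $m$. Let $S\subseteq\mathbb{K}$ be finite of cardinality $q$, and let $L\in\mathbb{K}^{(n-m)\times n}$ have entries chosen independently and uniformly at random from $S$. Then $x^{\deg(A)+1}L$ is a completion of $A$ with probability at least $\prod_{i=1}^{n-m}(1-q^{-i})$ if $\mathbb{K}$ is finite and $S=\mathbb{K}$, and with probability at least $1-\frac{n-m}{q}$ in general.
   Context: For a row vector $p=[p_1,\dots,p_n]\in\mathbb{K}[x]^{1\times n}$, $\deg(p)=\max_j \deg(p_j)$. For a matrix $M$, $\mathrm{rdeg}(M)$ is the tuple of degrees of its rows and $\deg(M)$ the maximum degree of its entries. If $M\in\mathbb{K}[x]^{k\times n}$ has no zero row, its leading matrix $\mathrm{lm}(M)\in\mathbb{K}^{k\times n}$ has $(i,j)$ entry equal to the coefficient of degree $\deg(\text{row } i)$ of $M_{i,j}$. A matrix $R\in\mathbb{K}[x]^{k\times n}$ with $k\le n$ is (row) reduced if it has no zero row and $\mathrm{lm}(R)$ has full rank $k$. The pivot index of a nonzero row vector $p$ is the largest $j$ with $\deg(p_j)=\deg(p)$, and $p_j$ is its pivot entry. A matrix $P\in\mathbb{K}[x]^{k\times n}$ is in Popov form if it has no zero row, the pivot indices of its rows are strictly increasing, its pivot entries are monic, and in each column containing a pivot entry all other entries have degree strictly less than that pivot entry. The Popov form of a matrix $A$ of rank $r$ is the unique matrix in $\mathbb{K}[x]^{r\times n}$ in Popov form whose rows generate the same $\mathbb{K}[x]$-module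 as the rows of $A$. For $A\in\mathbb{K}[x]^{m\times n}$ of full rank $m<n$ with Popov form $P$, a completion of $A$ is any $C\in\mathbb{K}[x]^{(n-m)\times n}$ such that $\min(\mathrm{rdeg}(C))>\deg(P)$ and $\begin{bmatrix} P\\ C\end{bmatrix}$ is row reduced. *)

theory Defs
  imports "HOL-Computational_Algebra.Polynomial" "Jordan_Normal_Form.Matrix"
begin

text \<open>Polynomial matrices over a field are represented as \<open>'a poly mat\<close>.
  Zero polynomials have degree "minus infinity" in the paper; we treat them
  explicitly wherever this matters.\<close>

definition row_deg :: "'a::zero poly mat \<Rightarrow> nat \<Rightarrow> nat" where
  "row_deg M i = Max ({degree (M $$ (i, j)) | j. j < dim_col M} \<union> {0})"

definition mat_deg :: "'a::zero poly mat \<Rightarrow> nat" where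
  "mat_deg M = Max ({degree (M $$ (i, j)) | i j. i < dim_row M \<and> j < dim_col M} \<union> {0})"

definition zero_row :: "'a::zero poly mat \<Rightarrow> nat \<Rightarrow> bool" where
  "zero_row M i \<longleftrightarrow> (\<forall>j < dim_col M. M $$ (i, j) = 0)"

definition no_zero_row :: "'a::zero poly mat \<Rightarrow> bool" where
  "no_zero_row M \<longleftrightarrow> (\<forall>i < dim_row M. \<not> zero_row M i)"

definition lead_mat :: "'a::zero poly mat \<Rightarrow> 'a mat" where
  "lead_mat M = mat (dim_row M) (dim_col M) (\<lambda>(i, j). coeff (M $$ (i, j)) (row_deg M i))"

definition full_row_rank :: "'a::comm_ring_1 mat \<Rightarrow> bool" where
  "full_row_rank M \<longleftrightarrow>
     (\<forall>v \<in> carrier_vec (dim_row M). transpose_mat M *\<^sub>v v = 0\<^sub>v (dim_col M) \<longrightarrow> v = 0\<^sub>v (dim_row M))"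

definition row_reduced :: "'a::field poly mat \<Rightarrow> bool" where
  "row_reduced R \<longleftrightarrow> dim_row R \<le> dim_col R \<and> no_zero_row R \<and> full_row_rank (lead_mat R)"

definition pivot_index :: "'a::zero poly mat \<Rightarrow> nat \<Rightarrow> nat" where
  "pivot_index M i = (GREATEST j. j < dim_col M \<and> M $$ (i, j) \<noteq> 0 \<and> degree (M $$ (i, j)) = row_deg M i)"

definition is_popov :: "'a::field poly mat \<Rightarrow> bool" where
  "is_popov P \<longleftrightarrow> no_zero_row P
     \<and> (\<forall>i i'. i < i' \<and> i' < dim_row P \<longrightarrow> pivot_index P i < pivot_index P i')
     \<and> (\<forall>i < dim_row P. lead_coeff (P $$ (i, pivot_index P i)) = 1)
     \<and> (\<forall>i < dim_row P. \<forall>k < dim_row P. k \<noteq> i \<longrightarrow>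
          P $$ (k, pivot_index P i) = 0 \<or>
          degree (P $$ (k, pivot_index P i)) < degree (P $$ (i, pivot_index P i)))"

definition row_module :: "'a::comm_ring_1 mat \<Rightarrow> 'a vec set" where
  "row_module A = {transpose_mat A *\<^sub>v v | v. v \<in> carrier_vec (dim_row A)}"

definition popov_form :: "'a::field poly mat \<Rightarrow> 'a poly mat" where
  "popov_form A = (THE P. dim_col P = dim_col A \<and> is_popov P \<and> row_module P = row_module A)"

definition is_completion :: "'a::field poly mat \<Rightarrow> 'a poly mat \<Rightarrow> bool" where
  "is_completion A C \<longleftrightarrow>
     (let P = popov_form A in
        C \<in> carrier_mat (dim_col A - dim_row A) (dim_col A)
        \<and> (\<forall>i < dim_row C. row_deg C i > mat_deg P)
        \<and> row_reduced (P @\<^sub>r C))"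

definition xpow_smult :: "nat \<Rightarrow> 'a::zero mat \<Rightarrow> 'a poly mat" where
  "xpow_smult d L = map_mat (\<lambda>c. monom c d) L"

definition mats_over :: "'a set \<Rightarrow> nat \<Rightarrow> nat \<Rightarrow> 'a mat set" where
  "mats_over S k n = {L \<in> carrier_mat k n. \<forall>i < k. \<forall>j < n. L $$ (i, j) \<in> S}"

end

theory Submission
  imports Defs "HOL-Library.FuncSet"
begin


lemma rowmod_iff:
  "v \<in> row_module A \<longleftrightarrow> v \<in> carrier_vec (dim_col A) \<and>
     (\<exists>u. \<forall>j<dim_col A. v $ j = (\<Sum>b<dim_row A. A $$ (b,j) * u b))"
proof
  assume "v \<in> row_module A"
  then obtain w where w: "w \<in> carrier_vec (dim_row A)" and v: "v = transpose_mat A *\<^sub>v w"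
    unfolding row_module_def by auto
  have "\<forall>j<dim_col A. v $ j = (\<Sum>b<dim_row A. A $$ (b,j) * w $ b)"
  proof (intro allI impI)
    fix j assume j: "j < dim_col A"
    have "v $ j = row (transpose_mat A) j \<bullet> w" unfolding v using j by simp
    also have "\<dots> = (\<Sum>b<dim_row A. A $$ (b,j) * w $ b)"
      unfolding scalar_prod_def using w j by (simp add: atLeast0LessThan)
    finally show "v $ j = (\<Sum>b<dim_row A. A $$ (b,j) * w $ b)" .
  qed
  note h = this
  have c: "v \<in> carrier_vec (dim_col A)" unfolding v carrier_vec_def by simp
  show "v \<in> carrier_vec (dim_col A) \<and> (\<exists>u. \<forall>j<dim_col A. v $ j = (\<Sum>b<dim_row A. A $$ (b,j) * u b))"
    apply (rule conjI[OF c])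
    apply (rule exI[where x="\<lambda>b. w $ b"])
    by (rule h)
next
  assume "v \<in> carrier_vec (dim_col A) \<and> (\<exists>u. \<forall>j<dim_col A. v $ j = (\<Sum>b<dim_row A. A $$ (b,j) * u b))"
  then obtain u where v: "v \<in> carrier_vec (dim_col A)" and u: "\<forall>j<dim_col A. v $ j = (\<Sum>b<dim_row A. A $$ (b,j) * u b)" by blast
  have "v = transpose_mat A *\<^sub>v vec (dim_row A) u"
    by (rule eq_vecI, insert v u, auto simp: scalar_prod_def atLeast0LessThan)
  then show "v \<in> row_module A" unfolding row_module_def by auto
qed

lemma fr_iff:
  "full_row_rank M \<longleftrightarrow> (\<forall>u. (\<forall>j<dim_col M. (\<Sum>b<dim_row M. M $$ (b,j) * u b) = 0) \<longrightarrow> (\<forall>b<dim_row M. u b = 0))"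
proof
  assume fr: "full_row_rank M"
  show "\<forall>u. (\<forall>j<dim_col M. (\<Sum>b<dim_row M. M $$ (b,j) * u b) = 0) \<longrightarrow> (\<forall>b<dim_row M. u b = 0)"
  proof (intro allI impI)
    fix u b assume h: "\<forall>j<dim_col M. (\<Sum>b<dim_row M. M $$ (b,j) * u b) = 0" and b: "b < dim_row M"
    have "transpose_mat M *\<^sub>v vec (dim_row M) u = 0\<^sub>v (dim_col M)"
      by (rule eq_vecI, insert h, auto simp: scalar_prod_def atLeast0LessThan)
    with fr have "vec (dim_row M) u = 0\<^sub>v (dim_row M)" unfolding full_row_rank_def by auto
    then have "vec (dim_row M) u $ b = 0" using b by simp
    then show "u b = 0" using b by simp
  qed
next
  assume h: "\<forall>u. (\<forall>j<dim_col M. (\<Sum>b<dim_row M. M $$ (b,j) * u b) = 0) \<longrightarrow> (\<forall>b<dim_row M. u b = 0)"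
  show "full_row_rank M" unfolding full_row_rank_def
  proof (intro ballI impI)
    fix v :: "'a vec" assume v: "v \<in> carrier_vec (dim_row M)" and e: "transpose_mat M *\<^sub>v v = 0\<^sub>v (dim_col M)"
    have "\<forall>j<dim_col M. (\<Sum>b<dim_row M. M $$ (b,j) * v $ b) = 0"
    proof (intro allI impI)
      fix j assume j: "j < dim_col M"
      have "(transpose_mat M *\<^sub>v v) $ j = 0" using e j by simp
      then show "(\<Sum>b<dim_row M. M $$ (b,j) * v $ b) = 0" using j v by (simp add: scalar_prod_def atLeast0LessThan)
    qed
    with h have "\<forall>b<dim_row M. v $ b = 0" by blast
    then show "v = 0\<^sub>v (dim_row M)" using v by auto
  qed
qed

lemma rowmod_sub:
  assumes cols: "dim_col B = dim_col A"
    and rows: "\<forall>a<dim_row B. \<exists>u. \<forall>j<dim_col A. B $$ (a,j) = (\<Sum>b<dim_row A. A $$ (b,j) * u b)"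
  shows "row_module B \<subseteq> row_module A"
proof
  fix v assume "v \<in> row_module B"
  then obtain w where v: "v \<in> carrier_vec (dim_col B)" and w: "\<forall>j<dim_col B. v $ j = (\<Sum>a<dim_row B. B $$ (a,j) * w a)"
    unfolding rowmod_iff by blast
  from rows have "\<forall>a. \<exists>u. a < dim_row B \<longrightarrow> (\<forall>j<dim_col A. B $$ (a,j) = (\<Sum>b<dim_row A. A $$ (b,j) * u b))"
    by blast
  then obtain U where U: "\<forall>a<dim_row B. \<forall>j<dim_col A. B $$ (a,j) = (\<Sum>b<dim_row A. A $$ (b,j) * U a b)"
    by (metis (no_types))
  have "\<forall>j<dim_col A. v $ j = (\<Sum>b<dim_row A. A $$ (b,j) * (\<Sum>a<dim_row B. U a b * w a))"
  proof (intro allI impI)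
    fix j assume j: "j < dim_col A"
    have "v $ j = (\<Sum>a<dim_row B. (\<Sum>b<dim_row A. A $$ (b,j) * U a b) * w a)"
      using w U j cols by simp
    also have "\<dots> = (\<Sum>a<dim_row B. \<Sum>b<dim_row A. A $$ (b,j) * (U a b * w a))"
      by (simp add: sum_distrib_right mult.assoc)
    also have "\<dots> = (\<Sum>b<dim_row A. \<Sum>a<dim_row B. A $$ (b,j) * (U a b * w a))"
      by (rule sum.swap)
    also have "\<dots> = (\<Sum>b<dim_row A. A $$ (b,j) * (\<Sum>a<dim_row B. U a b * w a))"
      by (simp add: sum_distrib_left)
    finally show "v $ j = (\<Sum>b<dim_row A. A $$ (b,j) * (\<Sum>a<dim_row B. U a b * w a))" .
  qed
  note h = this
  have c: "v \<in> carrier_vec (dim_col A)" using v cols by (simp only:)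
  show "v \<in> row_module A"
    apply (subst rowmod_iff)
    apply (rule conjI[OF c])
    apply (rule exI[where x="\<lambda>b. \<Sum>a<dim_row B. U a b * w a"])
    by (rule h)
qed

lemma row_in_rowmod:
  fixes A :: "'a::comm_ring_1 mat"
  assumes "a < dim_row A"
  shows "\<exists>u. \<forall>j<dim_col A. A $$ (a,j) = (\<Sum>b<dim_row A. A $$ (b,j) * u b)"
proof -
  have "\<forall>j<dim_col A. A $$ (a,j) = (\<Sum>b<dim_row A. A $$ (b,j) * (if b = a then 1 else 0))"
  proof (intro allI impI)
    fix j assume j: "j < dim_col A"
    have "(\<Sum>b<dim_row A. A $$ (b,j) * (if b = a then 1 else 0)) = (\<Sum>b<dim_row A. if b = a then A $$ (b,j) else 0)"
      by (rule sum.cong) auto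
    also have "\<dots> = A $$ (a,j)" using assms by (simp add: sum.delta')
    finally show "A $$ (a,j) = (\<Sum>b<dim_row A. A $$ (b,j) * (if b = a then 1 else 0))" by simp
  qed
  then show ?thesis by (rule exI[where x="\<lambda>b. if b = a then 1 else 0"])
qed



definition tc :: "nat \<Rightarrow> (nat \<Rightarrow> 'a::zero poly) \<Rightarrow> nat \<Rightarrow> 'a" where
  "tc n r N = coeff (r (N mod n)) (N div n)"

definition bnd :: "nat \<Rightarrow> (nat \<Rightarrow> 'a::zero poly) \<Rightarrow> nat \<Rightarrow> bool" where
  "bnd n r L \<longleftrightarrow> (\<forall>N>L. tc n r N = 0)"

definition lp :: "nat \<Rightarrow> (nat \<Rightarrow> 'a::zero poly) \<Rightarrow> nat" where
  "lp n r = Max {N. tc n r N \<noteq> 0}"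

lemma tc_at: "j < n \<Longrightarrow> tc n r (t * n + j) = coeff (r j) t"
  unfolding tc_def by simp

lemma tc_nz: assumes "j < n" "r j \<noteq> 0" shows "tc n r (degree (r j) * n + j) \<noteq> 0"
  using assms by (simp add: tc_at)

lemma tc_finite: assumes n: "n > 0" shows "finite {N. tc n r N \<noteq> 0}"
proof -
  define D where "D = Max ((\<lambda>j. degree (r j)) ` {..<n})"
  have "{N. tc n r N \<noteq> 0} \<subseteq> {..<(D+1)*n}"
  proof
    fix N assume "N \<in> {N. tc n r N \<noteq> 0}"
    then have c: "coeff (r (N mod n)) (N div n) \<noteq> 0" unfolding tc_def by simp
    have "N div n \<le> degree (r (N mod n))" using c le_degree by blast
    also have "\<dots> \<le> D" unfolding D_def using n by (intro Max_ge) auto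
    finally have "N div n \<le> D" .
    then have "N div n < D + 1" by simp
    then show "N \<in> {..<(D+1)*n}" using n by (simp add: div_less_iff_less_mult)
  qed
  then show ?thesis using finite_subset by blast
qed

lemma lp_props:
  assumes n: "n > 0" and j: "j < n" and rj: "r j \<noteq> 0"
  shows "tc n r (lp n r) \<noteq> 0" "bnd n r (lp n r)"
proof -
  have ne: "{N. tc n r N \<noteq> 0} \<noteq> {}" using tc_nz[of j n r, OF j rj] by blast
  show "tc n r (lp n r) \<noteq> 0" unfolding lp_def using Max_in[OF tc_finite[OF n] ne] by simp
  show "bnd n r (lp n r)" unfolding bnd_def lp_def
    using Max_ge[OF tc_finite[OF n]] by (auto simp: not_le[symmetric])
qed

lemma lp_unique:
  assumes n: "n > 0" and "tc n r L \<noteq> 0" "bnd n r L"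
  shows "lp n r = L"
proof -
  have "L \<in> {N. tc n r N \<noteq> 0}" using assms by simp
  moreover have "\<forall>N\<in>{N. tc n r N \<noteq> 0}. N \<le> L" using assms(3) unfolding bnd_def
    using not_le by blast
  ultimately show ?thesis unfolding lp_def using tc_finite[OF n]
    by (intro Max_eqI) auto
qed

lemma bnd_coeff:
  assumes n: "n > 0" and b: "bnd n r L" and j: "j < n" and t: "t > L div n"
  shows "coeff (r j) t = 0"
proof -
  have "t * n + j > L"
  proof -
    have "L < (L div n + 1) * n" using n
      by (metis div_less_iff_less_mult less_add_one)
    also have "\<dots> \<le> t * n" using t by (intro mult_right_mono) auto
    finally show ?thesis by simp
  qed
  then have "tc n r (t * n + j) = 0" using b unfolding bnd_def by blast
  then show ?thesis using j by (simp add: tc_at)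
qed

lemma bnd_degree:
  assumes n: "n > 0" and b: "bnd n r L" and j: "j < n"
  shows "degree (r j) \<le> L div n"
proof (rule ccontr)
  assume "\<not> degree (r j) \<le> L div n"
  then have "degree (r j) > L div n" by simp
  then have "coeff (r j) (degree (r j)) = 0" using bnd_coeff[OF n b j] by blast
  then have "r j = 0" by simp
  then show False using \<open>degree (r j) > L div n\<close> by simp
qed

lemma tc_lp_degree:
  assumes n: "n > 0" and "tc n r L \<noteq> 0" "bnd n r L"
  shows "degree (r (L mod n)) = L div n" "r (L mod n) \<noteq> 0"
proof -
  have c: "coeff (r (L mod n)) (L div n) \<noteq> 0" using assms(2) unfolding tc_def .
  then show "r (L mod n) \<noteq> 0" by auto
  have "L div n \<le> degree (r (L mod n))" using c le_degree by blast
  moreover have "degree (r (L mod n)) \<le> L div n" using bnd_degree[OF n assms(3)] n by simp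
  ultimately show "degree (r (L mod n)) = L div n" by simp
qed

lemma link:
  fixes M :: "'a::zero poly mat"
  assumes n: "dim_col M > 0" and tcL: "tc (dim_col M) (\<lambda>j. M $$ (i,j)) L \<noteq> 0"
    and bL: "bnd (dim_col M) (\<lambda>j. M $$ (i,j)) L"
  shows "row_deg M i = L div dim_col M" "pivot_index M i = L mod dim_col M" "\<not> zero_row M i"
proof -
  let ?n = "dim_col M" let ?r = "\<lambda>j. M $$ (i,j)"
  have dg: "degree (?r (L mod ?n)) = L div ?n" and nz: "?r (L mod ?n) \<noteq> 0"
    using tc_lp_degree[OF n tcL bL] by auto
  have jl: "L mod ?n < ?n" using n by simp
  have le: "\<And>j. j < ?n \<Longrightarrow> degree (?r j) \<le> L div ?n" using bnd_degree[OF n bL] by blast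
  show rd: "row_deg M i = L div ?n" unfolding row_deg_def
  proof (rule Max_eqI)
    show "finite ({degree (M $$ (i, j)) |j. j < ?n} \<union> {0})" by simp
    show "\<And>y. y \<in> {degree (M $$ (i, j)) |j. j < ?n} \<union> {0} \<Longrightarrow> y \<le> L div ?n" using le by auto
    show "L div ?n \<in> {degree (M $$ (i, j)) |j. j < ?n} \<union> {0}" using dg jl by force
  qed
  show "pivot_index M i = L mod ?n" unfolding pivot_index_def rd
  proof (rule Greatest_equality)
    show "L mod ?n < ?n \<and> M $$ (i, L mod ?n) \<noteq> 0 \<and> degree (M $$ (i, L mod ?n)) = L div ?n"
      using jl nz dg by simp
    fix j assume h: "j < ?n \<and> M $$ (i, j) \<noteq> 0 \<and> degree (M $$ (i, j)) = L div ?n"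
    then have "coeff (?r j) (L div ?n) \<noteq> 0" by (metis leading_coeff_0_iff)
    then have "tc ?n ?r ((L div ?n) * ?n + j) \<noteq> 0" using h by (simp add: tc_at)
    then have "(L div ?n) * ?n + j \<le> L" using bL unfolding bnd_def using not_le by blast
    moreover have "L = (L div ?n) * ?n + L mod ?n" by simp
    ultimately show "j \<le> L mod ?n" by linarith
  qed
  show "\<not> zero_row M i" unfolding zero_row_def using jl nz by blast
qed

lemma tc_add: "tc n (\<lambda>j. f j + g j) N = tc n f N + tc n g N"
  unfolding tc_def by (simp add: coeff_add)
lemma tc_diff: "tc n (\<lambda>j. f j - g j) N = tc n f N - tc n g N"
  unfolding tc_def by (simp add: coeff_diff)
lemma tc_sum: "tc n (\<lambda>j. \<Sum>i\<in>I. F i j) N = (\<Sum>i\<in>I. tc n (F i) N)"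
  unfolding tc_def by (simp add: coeff_sum)
lemma tc_smult: "tc n (\<lambda>j. Polynomial.smult c (f j)) N = c * tc n f N"
  unfolding tc_def by simp

lemma tc_mult:
  fixes p :: "'a::comm_ring_1 poly"
  assumes n: "n > 0" and b: "bnd n r L"
  shows "bnd n (\<lambda>j. p * r j) (L + n * degree p)"
    "tc n (\<lambda>j. p * r j) (L + n * degree p) = lead_coeff p * tc n r L"
proof -
  show "bnd n (\<lambda>j. p * r j) (L + n * degree p)" unfolding bnd_def
  proof (intro allI impI)
    fix N assume N: "N > L + n * degree p"
    define t where "t = N div n" define j where "j = N mod n"
    have Nt: "N = t * n + j" unfolding t_def j_def by simp
    have j: "j < n" unfolding j_def using n by simp
    have "coeff (p * r j) t = (\<Sum>s\<le>t. coeff p s * coeff (r j) (t - s))" by (rule coeff_mult)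
    also have "\<dots> = 0"
    proof (rule sum.neutral, intro ballI)
      fix s assume s: "s \<in> {..t}"
      show "coeff p s * coeff (r j) (t - s) = 0"
      proof (cases "s \<le> degree p")
        case False then show ?thesis by (simp add: coeff_eq_0)
      next
        case True
        have a1: "s * n \<le> degree p * n" using True by simp
        have "s \<le> t" using s by simp
        then have a2: "s * n \<le> t * n" by simp
        have a3: "(t - s) * n = t * n - s * n" by (simp add: diff_mult_distrib)
        have a4: "n * degree p = degree p * n" by simp
        have "(t - s) * n + j > L" using N Nt a1 a2 a3 a4 by linarith
        then have "tc n r ((t - s) * n + j) = 0" using b unfolding bnd_def by blast
        then show ?thesis using j by (simp add: tc_at)
      qed
    qed
    finally show "tc n (\<lambda>j. p * r j) N = 0" unfolding tc_def t_def j_def by simp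
  qed
  define t where "t = L div n + degree p" define j where "j = L mod n"
  have Nt: "L + n * degree p = t * n + j" unfolding t_def j_def by (simp add: algebra_simps)
  have j: "j < n" unfolding j_def using n by simp
  have "coeff (p * r j) t = (\<Sum>s\<le>t. coeff p s * coeff (r j) (t - s))" by (rule coeff_mult)
  also have "\<dots> = (\<Sum>s\<le>t. if s = degree p then lead_coeff p * tc n r L else 0)"
  proof (rule sum.cong[OF refl])
    fix s assume s: "s \<in> {..t}"
    show "coeff p s * coeff (r j) (t - s) = (if s = degree p then lead_coeff p * tc n r L else 0)"
    proof (cases "s = degree p")
      case True then show ?thesis unfolding tc_def t_def j_def by simp
    next
      case False
      show ?thesis
      proof (cases "s < degree p")
        case False': False
        then show ?thesis using \<open>s \<noteq> degree p\<close> by (simp add: coeff_eq_0)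
      next
        case True
        have a1: "s * n < degree p * n" using True n by simp
        have "s \<le> t" using s by simp
        then have a2: "s * n \<le> t * n" by simp
        have a3: "(t - s) * n = t * n - s * n" by (simp add: diff_mult_distrib)
        have a4: "n * degree p = degree p * n" by simp
        have "(t - s) * n + j > L" using Nt a1 a2 a3 a4 by linarith
        then have "tc n r ((t - s) * n + j) = 0" using b unfolding bnd_def by blast
        then show ?thesis using j False by (simp add: tc_at)
      qed
    qed
  qed
  also have "\<dots> = lead_coeff p * tc n r L" by (simp add: t_def)
  finally show "tc n (\<lambda>j. p * r j) (L + n * degree p) = lead_coeff p * tc n r L"
    unfolding tc_def using Nt j by (simp add: j_def t_def)
qed



definition addrow :: "nat \<Rightarrow> nat \<Rightarrow> 'a::comm_ring_1 \<Rightarrow> 'a mat \<Rightarrow> 'a mat" where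
  "addrow i k p P = mat (dim_row P) (dim_col P) (\<lambda>(a,j). if a = i then P $$ (i,j) + p * P $$ (k,j) else P $$ (a,j))"

lemma addrow_dims[simp]: "dim_row (addrow i k p P) = dim_row P" "dim_col (addrow i k p P) = dim_col P"
  unfolding addrow_def by auto

lemma addrow_index: "a < dim_row P \<Longrightarrow> j < dim_col P \<Longrightarrow>
  addrow i k p P $$ (a,j) = (if a = i then P $$ (i,j) + p * P $$ (k,j) else P $$ (a,j))"
  unfolding addrow_def by simp

lemma sum_delta_mult:
  fixes f :: "nat \<Rightarrow> 'a::comm_ring_1"
  assumes "i < m"
  shows "(\<Sum>b<m. f b * (if b = i then c else 0)) = f i * c"
proof -
  have "(\<Sum>b<m. f b * (if b = i then c else 0)) = (\<Sum>b<m. if b = i then f b * c else 0)"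
    by (rule sum.cong) auto
  also have "\<dots> = f i * c" using assms by (simp add: sum.delta')
  finally show ?thesis .
qed

lemma rowmod_addrow_sub:
  fixes P :: "'a::comm_ring_1 mat"
  assumes i: "i < dim_row P" and k: "k < dim_row P"
  shows "row_module (addrow i k p P) \<subseteq> row_module P"
proof (rule rowmod_sub)
  show "dim_col (addrow i k p P) = dim_col P" by simp
  show "\<forall>a<dim_row (addrow i k p P). \<exists>u. \<forall>j<dim_col P. addrow i k p P $$ (a, j) = (\<Sum>b<dim_row P. P $$ (b, j) * u b)"
  proof (intro allI impI)
    fix a assume a: "a < dim_row (addrow i k p P)"
    show "\<exists>u. \<forall>j<dim_col P. addrow i k p P $$ (a, j) = (\<Sum>b<dim_row P. P $$ (b, j) * u b)"
    proof (cases "a = i")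
      case True
      have "\<forall>j<dim_col P. addrow i k p P $$ (a, j) = (\<Sum>b<dim_row P. P $$ (b, j) * ((if b = i then 1 else 0) + (if b = k then p else 0)))"
      proof (intro allI impI)
        fix j assume j: "j < dim_col P"
        have "(\<Sum>b<dim_row P. P $$ (b, j) * ((if b = i then 1 else 0) + (if b = k then p else 0)))
          = (\<Sum>b<dim_row P. P $$ (b, j) * (if b = i then 1 else 0)) + (\<Sum>b<dim_row P. P $$ (b, j) * (if b = k then p else 0))"
          by (simp add: distrib_left sum.distrib)
        also have "\<dots> = P $$ (i,j) + P $$ (k,j) * p" using i k by (simp only: sum_delta_mult) simp
        finally show "addrow i k p P $$ (a, j) = (\<Sum>b<dim_row P. P $$ (b, j) * ((if b = i then 1 else 0) + (if b = k then p else 0)))"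
          using True a j by (simp add: addrow_index mult.commute)
      qed
      then show ?thesis by (rule exI[where x="\<lambda>b. (if b = i then 1 else 0) + (if b = k then p else 0)"])
    next
      case False
      have "\<forall>j<dim_col P. addrow i k p P $$ (a, j) = (\<Sum>b<dim_row P. P $$ (b, j) * (if b = a then 1 else 0))"
        using False a by (simp add: sum_delta_mult addrow_index)
      then show ?thesis by (rule exI[where x="\<lambda>b. if b = a then 1 else 0"])
    qed
  qed
qed

lemma addrow_inv:
  fixes P :: "'a::comm_ring_1 mat"
  assumes "i \<noteq> k" "i < dim_row P" "k < dim_row P"
  shows "addrow i k (-p) (addrow i k p P) = P"
  by (rule eq_matI, insert assms, auto simp: addrow_index)

lemma rowmod_addrow:
  fixes P :: "'a::comm_ring_1 mat"
  assumes "i \<noteq> k" "i < dim_row P" "k < dim_row P"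
  shows "row_module (addrow i k p P) = row_module P"
proof
  show "row_module (addrow i k p P) \<subseteq> row_module P" using assms rowmod_addrow_sub by blast
  have "row_module (addrow i k (-p) (addrow i k p P)) \<subseteq> row_module (addrow i k p P)"
    using assms by (intro rowmod_addrow_sub) auto
  then show "row_module P \<subseteq> row_module (addrow i k p P)" using addrow_inv[OF assms] by simp
qed

lemma fr_addrow:
  fixes P :: "'a::comm_ring_1 mat"
  assumes ik: "i \<noteq> k" and i: "i < dim_row P" and k: "k < dim_row P" and fr: "full_row_rank P"
  shows "full_row_rank (addrow i k p P)"
  unfolding fr_iff addrow_dims
proof (intro allI impI)
  fix w b assume h: "\<forall>j<dim_col P. (\<Sum>b<dim_row P. addrow i k p P $$ (b, j) * w b) = 0" and b: "b < dim_row P"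
  define w' where "w' = w(k := w k + p * w i)"
  have eq: "(\<Sum>a<dim_row P. P $$ (a, j) * w' a) = (\<Sum>a<dim_row P. addrow i k p P $$ (a, j) * w a)"
    if j: "j < dim_col P" for j
  proof -
    have "(\<Sum>a<dim_row P. addrow i k p P $$ (a, j) * w a)
        = (\<Sum>a<dim_row P. P $$ (a, j) * w a + (if a = i then p * P $$ (k,j) * w i else 0))"
      by (rule sum.cong, insert j, auto simp: addrow_index algebra_simps)
    also have "\<dots> = (\<Sum>a<dim_row P. P $$ (a, j) * w a) + p * P $$ (k,j) * w i"
      using i by (simp add: sum.distrib sum.delta')
    finally have e1: "(\<Sum>a<dim_row P. addrow i k p P $$ (a, j) * w a) = (\<Sum>a<dim_row P. P $$ (a, j) * w a) + p * P $$ (k,j) * w i" .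
    have "(\<Sum>a<dim_row P. P $$ (a, j) * w' a)
        = (\<Sum>a<dim_row P. P $$ (a, j) * w a + (if a = k then P $$ (k,j) * (p * w i) else 0))"
      by (rule sum.cong, auto simp: w'_def algebra_simps)
    also have "\<dots> = (\<Sum>a<dim_row P. P $$ (a, j) * w a) + P $$ (k,j) * (p * w i)"
      using k by (simp add: sum.distrib sum.delta')
    finally show ?thesis using e1 by (simp add: algebra_simps)
  qed
  have "\<forall>a<dim_row P. w' a = 0" using fr unfolding fr_iff using h eq by simp
  then have w0: "\<forall>a<dim_row P. a \<noteq> k \<longrightarrow> w a = 0" and "w k + p * w i = 0"
    unfolding w'_def using k by (auto split: if_splits)
  then have "w k = 0" using w0 ik i by simp
  then show "w b = 0" using w0 b by (cases "b = k") auto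
qed

definition permscale :: "nat \<Rightarrow> nat \<Rightarrow> (nat \<Rightarrow> nat) \<Rightarrow> (nat \<Rightarrow> 'a::field) \<Rightarrow> 'a poly mat \<Rightarrow> 'a poly mat" where
  "permscale m n \<sigma> c P = mat m n (\<lambda>(a,j). Polynomial.smult (c a) (P $$ (\<sigma> a, j)))"

lemma rowmod_permscale:
  fixes P :: "'a::field poly mat"
  assumes P: "P \<in> carrier_mat m n" and \<sigma>: "bij_betw \<sigma> {..<m} {..<m}" and c: "\<forall>a<m. c a \<noteq> 0"
  shows "row_module (permscale m n \<sigma> c P) = row_module P"
proof
  let ?Q = "permscale m n \<sigma> c P"
  have Qd: "dim_row ?Q = m" "dim_col ?Q = n" unfolding permscale_def by auto
  have Qi: "\<And>a j. a < m \<Longrightarrow> j < n \<Longrightarrow> ?Q $$ (a,j) = Polynomial.smult (c a) (P $$ (\<sigma> a, j))"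
    unfolding permscale_def by simp
  show "row_module ?Q \<subseteq> row_module P"
  proof (rule rowmod_sub)
    show "dim_col ?Q = dim_col P" using Qd P by simp
    show "\<forall>a<dim_row ?Q. \<exists>u. \<forall>j<dim_col P. ?Q $$ (a, j) = (\<Sum>b<dim_row P. P $$ (b, j) * u b)"
    proof (intro allI impI)
      fix a assume a: "a < dim_row ?Q"
      have sa: "\<sigma> a < m" using \<sigma> a Qd by (auto simp: bij_betw_def)
      have "\<forall>j<dim_col P. ?Q $$ (a, j) = (\<Sum>b<dim_row P. P $$ (b, j) * (if b = \<sigma> a then [:c a:] else 0))"
        using a sa P Qd by (simp add: sum_delta_mult Qi)
      then show "\<exists>u. \<forall>j<dim_col P. ?Q $$ (a, j) = (\<Sum>b<dim_row P. P $$ (b, j) * u b)"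
        by (rule exI[where x="\<lambda>b. if b = \<sigma> a then [:c a:] else 0"])
    qed
  qed
  show "row_module P \<subseteq> row_module ?Q"
  proof (rule rowmod_sub)
    show "dim_col P = dim_col ?Q" using Qd P by simp
    show "\<forall>b<dim_row P. \<exists>u. \<forall>j<dim_col ?Q. P $$ (b, j) = (\<Sum>a<dim_row ?Q. ?Q $$ (a, j) * u a)"
    proof (intro allI impI)
      fix b assume b: "b < dim_row P"
      define a where "a = inv_into {..<m} \<sigma> b"
      have bm: "b \<in> \<sigma> ` {..<m}" using \<sigma> b P by (auto simp: bij_betw_def)
      have a: "a < m" "\<sigma> a = b" unfolding a_def using inv_into_into[OF bm] f_inv_into_f[OF bm] by auto
      have "\<forall>j<dim_col ?Q. P $$ (b, j) = (\<Sum>a'<dim_row ?Q. ?Q $$ (a', j) * (if a' = a then [:1 / c a:] else 0))"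
      proof (intro allI impI)
        fix j assume j: "j < dim_col ?Q"
        have "(\<Sum>a'<dim_row ?Q. ?Q $$ (a', j) * (if a' = a then [:1 / c a:] else 0)) = ?Q $$ (a, j) * [:1 / c a:]"
          unfolding Qd by (rule sum_delta_mult[OF a(1)])
        also have "\<dots> = P $$ (b, j)" using a j Qd c by (simp add: Qi)
        finally show "P $$ (b, j) = (\<Sum>a'<dim_row ?Q. ?Q $$ (a', j) * (if a' = a then [:1 / c a:] else 0))" by simp
      qed
      then show "\<exists>u. \<forall>j<dim_col ?Q. P $$ (b, j) = (\<Sum>a<dim_row ?Q. ?Q $$ (a, j) * u a)"
        by (rule exI[where x="\<lambda>a'. if a' = a then [:1 / c a:] else 0"])
    qed
  qed
qed



abbreviation rw :: "'a mat \<Rightarrow> nat \<Rightarrow> nat \<Rightarrow> 'a" where "rw P i \<equiv> (\<lambda>j. P $$ (i,j))"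

definition rows_nz :: "'a::zero mat \<Rightarrow> bool" where
  "rows_nz P \<longleftrightarrow> (\<forall>i<dim_row P. \<exists>j<dim_col P. P $$ (i,j) \<noteq> 0)"

definition degle :: "nat \<Rightarrow> 'a::zero poly mat \<Rightarrow> bool" where
  "degle D P \<longleftrightarrow> (\<forall>i<dim_row P. \<forall>j<dim_col P. degree (P $$ (i,j)) \<le> D)"

definition wpop :: "'a::zero poly mat \<Rightarrow> bool" where
  "wpop P \<longleftrightarrow> rows_nz P \<and> inj_on (\<lambda>i. lp (dim_col P) (rw P i) mod dim_col P) {..<dim_row P}"

lemma tc_cong: "n > 0 \<Longrightarrow> (\<And>j. j < n \<Longrightarrow> r j = r' j) \<Longrightarrow> tc n r N = tc n r' N"
  unfolding tc_def by simp

lemma lp_cong: "n > 0 \<Longrightarrow> (\<And>j. j < n \<Longrightarrow> r j = r' j) \<Longrightarrow> lp n r = lp n r'"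
  unfolding lp_def using tc_cong[of n r r'] by presburger

lemma bnd_cong: "n > 0 \<Longrightarrow> (\<And>j. j < n \<Longrightarrow> r j = r' j) \<Longrightarrow> bnd n r L = bnd n r' L"
  unfolding bnd_def using tc_cong[of n r r'] by presburger

lemma fr_rows_nz:
  fixes P :: "'a::field poly mat"
  assumes "full_row_rank P" shows "rows_nz P"
  unfolding rows_nz_def
proof (intro allI impI)
  fix i assume i: "i < dim_row P"
  show "\<exists>j<dim_col P. P $$ (i, j) \<noteq> 0"
  proof (rule ccontr)
    assume "\<not> ?thesis"
    then have z: "\<forall>j<dim_col P. P $$ (i,j) = 0" by auto
    have "\<forall>j<dim_col P. (\<Sum>b<dim_row P. P $$ (b,j) * (if b = i then 1 else 0)) = 0"
    proof (intro allI impI)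
      fix j assume j: "j < dim_col P"
      have "(\<Sum>b<dim_row P. P $$ (b,j) * (if b = i then 1 else 0)) = P $$ (i,j) * 1"
        by (rule sum_delta_mult[OF i])
      then show "(\<Sum>b<dim_row P. P $$ (b,j) * (if b = i then 1 else 0)) = 0" using z j by simp
    qed
    then have "\<forall>b<dim_row P. (if b = i then 1 else 0 :: 'a poly) = 0"
      using assms[unfolded fr_iff, THEN spec[where x="\<lambda>b. if b = i then (1::'a poly) else 0"]] by blast
    then show False using i by (metis one_neq_zero)
  qed
qed

lemma row_lp:
  fixes P :: "'a::zero poly mat"
  assumes "rows_nz P" "i < dim_row P" "dim_col P > 0"
  shows "tc (dim_col P) (rw P i) (lp (dim_col P) (rw P i)) \<noteq> 0" "bnd (dim_col P) (rw P i) (lp (dim_col P) (rw P i))"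
proof -
  obtain j where "j < dim_col P" "P $$ (i,j) \<noteq> 0" using assms unfolding rows_nz_def by blast
  then show "tc (dim_col P) (rw P i) (lp (dim_col P) (rw P i)) \<noteq> 0" "bnd (dim_col P) (rw P i) (lp (dim_col P) (rw P i))"
    using lp_props[OF assms(3), of j "rw P i"] by auto
qed

lemma lp_div_le_D:
  fixes P :: "'a::zero poly mat"
  assumes "rows_nz P" "i < dim_row P" "dim_col P > 0" "degle D P"
  shows "lp (dim_col P) (rw P i) div dim_col P \<le> D"
proof -
  let ?n = "dim_col P" let ?L = "lp ?n (rw P i)"
  have "degree (rw P i (?L mod ?n)) = ?L div ?n"
    using tc_lp_degree[OF assms(3) row_lp[OF assms(1-3)]] by simp
  moreover have "?L mod ?n < ?n" using assms(3) by simp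
  ultimately show ?thesis using assms(2,4) unfolding degle_def by metis
qed

lemma stage1_step:
  fixes P :: "'a::field poly mat"
  assumes P: "P \<in> carrier_mat m n" and n: "n > 0" and fr: "full_row_rank P" and dg: "degle D P"
    and ik: "i \<noteq> k" and i: "i < m" and k: "k < m"
    and md: "lp n (rw P i) mod n = lp n (rw P k) mod n" and le: "lp n (rw P k) \<le> lp n (rw P i)"
  shows "\<exists>P'. P' \<in> carrier_mat m n \<and> full_row_rank P' \<and> row_module P' = row_module P \<and> degle D P'
     \<and> (\<Sum>a<m. lp n (rw P' a)) < (\<Sum>a<m. lp n (rw P a))"
proof -
  have rnz: "rows_nz P" using fr_rows_nz[OF fr] .
  have dP: "dim_row P = m" "dim_col P = n" using P by auto
  define Li where "Li = lp n (rw P i)" define Lk where "Lk = lp n (rw P k)"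
  have ti: "tc n (rw P i) Li \<noteq> 0" "bnd n (rw P i) Li" using row_lp[OF rnz] i n dP unfolding Li_def by auto
  have tk: "tc n (rw P k) Lk \<noteq> 0" "bnd n (rw P k) Lk" using row_lp[OF rnz] k n dP unfolding Lk_def by auto
  define e where "e = Li div n - Lk div n"
  define c where "c = tc n (rw P i) Li / tc n (rw P k) Lk"
  define p where "p = - monom c e"
  have c0: "c \<noteq> 0" unfolding c_def using ti tk by simp
  have dp: "degree p = e" unfolding p_def using c0 by (simp add: degree_monom_eq)
  have lcp: "lead_coeff p = - c" unfolding p_def dp[unfolded p_def] using c0 by (simp add: degree_monom_eq)
  have cpe: "coeff p e = - c" using lcp dp by simp
  have "Lk div n \<le> Li div n" using le unfolding Li_def Lk_def by (rule div_le_mono)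
  moreover have "Lk = Lk div n * n + Lk mod n" "Li = Li div n * n + Li mod n" by simp_all
  moreover have "Lk mod n = Li mod n" using md unfolding Li_def Lk_def by simp
  moreover have "n * e = Li div n * n - Lk div n * n" unfolding e_def by (simp add: diff_mult_distrib2 mult.commute)
  moreover have "Lk div n * n \<le> Li div n * n" using calculation(1) by (rule mult_right_mono) simp
  ultimately have LkLi: "Lk + n * e = Li" by linarith
  have m1: "bnd n (\<lambda>j. p * rw P k j) Li" "tc n (\<lambda>j. p * rw P k j) Li = - tc n (rw P i) Li"
    using tc_mult[OF n tk(2), of p] unfolding dp LkLi lcp using tk(1) cpe by (auto simp: c_def)
  define P' where "P' = addrow i k p P"
  have P'c: "P' \<in> carrier_mat m n" unfolding P'_def using P by auto
  have fr': "full_row_rank P'" unfolding P'_def using fr_addrow[OF ik _ _ fr] i k dP by auto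
  have rm: "row_module P' = row_module P" unfolding P'_def using rowmod_addrow[OF ik] i k dP by auto
  have rowi: "\<And>j. j < n \<Longrightarrow> rw P' i j = rw P i j + p * rw P k j"
    unfolding P'_def using i dP by (simp add: addrow_index)
  have rowo: "\<And>a j. a < m \<Longrightarrow> a \<noteq> i \<Longrightarrow> j < n \<Longrightarrow> rw P' a j = rw P a j"
    unfolding P'_def using dP by (simp add: addrow_index)
  have tci: "tc n (rw P' i) N = tc n (rw P i) N + tc n (\<lambda>j. p * rw P k j) N" for N
    using tc_cong[where N=N, OF n rowi] tc_add[of n "rw P i" "\<lambda>j. p * rw P k j" N] by simp
  have z: "tc n (rw P' i) N = 0" if "N \<ge> Li" for N
  proof (cases "N = Li")
    case True then show ?thesis using tci m1 by simp
  next
    case False then have "N > Li" using that by simp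
    then show ?thesis using tci ti(2) m1(1) unfolding bnd_def by simp
  qed
  have rnz': "rows_nz P'" using fr_rows_nz[OF fr'] .
  have dP': "dim_row P' = m" "dim_col P' = n" using P'c by auto
  have t': "tc n (rw P' i) (lp n (rw P' i)) \<noteq> 0" "bnd n (rw P' i) (lp n (rw P' i))"
    using row_lp[OF rnz'] i n dP' by auto
  have lt: "lp n (rw P' i) < Li" using z t'(1) not_le by blast
  have bi': "bnd n (rw P' i) Li" unfolding bnd_def using z less_imp_le by blast
  have eqo: "\<And>a. a < m \<Longrightarrow> a \<noteq> i \<Longrightarrow> lp n (rw P' a) = lp n (rw P a)"
  proof -
    fix a assume a: "a < m" "a \<noteq> i"
    show "lp n (rw P' a) = lp n (rw P a)" by (rule lp_cong[OF n]) (rule rowo[OF a])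
  qed
  have "(\<Sum>a<m. lp n (rw P' a)) < (\<Sum>a<m. lp n (rw P a))"
  proof (rule sum_strict_mono_ex1)
    show "finite {..<m}" by simp
    show "\<forall>a\<in>{..<m}. lp n (rw P' a) \<le> lp n (rw P a)"
      using eqo lt unfolding Li_def by (metis lessThan_iff order.strict_implies_order order_refl)
    show "\<exists>a\<in>{..<m}. lp n (rw P' a) < lp n (rw P a)" using lt i unfolding Li_def by auto
  qed
  moreover have "degle D P'" unfolding degle_def
  proof (intro allI impI)
    fix a j assume a: "a < dim_row P'" and j: "j < dim_col P'"
    show "degree (P' $$ (a, j)) \<le> D"
    proof (cases "a = i")
      case True
      have "degree (rw P' i j) \<le> Li div n" using bnd_degree[OF n bi'] j dP' by simp
      also have "Li div n \<le> D" unfolding Li_def using lp_div_le_D[OF rnz, of i D] i n dP dg by simp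
      finally show ?thesis using True by simp
    next
      case False then show ?thesis using rowo a j dg dP dP' unfolding degle_def by simp
    qed
  qed
  ultimately show ?thesis using P'c fr' rm by blast
qed

lemma stage1:
  fixes P :: "'a::field poly mat"
  shows "P \<in> carrier_mat m n \<Longrightarrow> n > 0 \<Longrightarrow> full_row_rank P \<Longrightarrow> degle D P \<Longrightarrow>
    \<exists>Q. Q \<in> carrier_mat m n \<and> row_module Q = row_module P \<and> degle D Q \<and> wpop Q"
proof (induction "\<Sum>a<m. lp n (rw P a)" arbitrary: P rule: less_induct)
  case less
  show ?case
  proof (cases "wpop P")
    case True then show ?thesis using less.prems by blast
  next
    case False
    have dP: "dim_row P = m" "dim_col P = n" using less.prems by auto
    have rnz: "rows_nz P" using fr_rows_nz[OF less.prems(3)] .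
    then obtain i k where ik: "i \<noteq> k" "i < m" "k < m" and md: "lp n (rw P i) mod n = lp n (rw P k) mod n"
      using False unfolding wpop_def inj_on_def dP by auto
    have "\<exists>i k. i \<noteq> k \<and> i < m \<and> k < m \<and> lp n (rw P i) mod n = lp n (rw P k) mod n \<and> lp n (rw P k) \<le> lp n (rw P i)"
    proof (cases "lp n (rw P k) \<le> lp n (rw P i)")
      case True then show ?thesis using ik md by blast
    next
      case False then show ?thesis using ik md by (intro exI[of _ k] exI[of _ i]) auto
    qed
    then obtain i k where "i \<noteq> k" "i < m" "k < m" "lp n (rw P i) mod n = lp n (rw P k) mod n" "lp n (rw P k) \<le> lp n (rw P i)"
      by blast
    from stage1_step[OF less.prems(1,2,3,4) this] obtain P' where
      P': "P' \<in> carrier_mat m n" "full_row_rank P'" "row_module P' = row_module P" "degle D P'"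
        "(\<Sum>a<m. lp n (rw P' a)) < (\<Sum>a<m. lp n (rw P a))" by blast
    from less.hyps[OF P'(5) P'(1) less.prems(2) P'(2) P'(4)] obtain Q where
      "Q \<in> carrier_mat m n" "row_module Q = row_module P'" "degle D Q" "wpop Q" by blast
    then show ?thesis using P'(3) by auto
  qed
qed



lemma tc_nz_entry: "n > 0 \<Longrightarrow> tc n r L \<noteq> 0 \<Longrightarrow> r (L mod n) \<noteq> 0"
  unfolding tc_def by auto

lemma small_coeffs: "(\<forall>t\<ge>d. coeff p t = 0) \<Longrightarrow> p = 0 \<or> degree p < d"
  by (metis leading_coeff_0_iff not_le)

lemma sum_pow2_less: "(\<Sum>i<N. (2::nat) ^ i) < 2 ^ N"
  by (induction N) auto

lemma pow2_sum_less:
  fixes X Y :: "nat set"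
  assumes X: "finite X" and Y: "finite Y" and N0X: "N0 \<in> X" and N0Y: "N0 \<notin> Y"
    and hi: "\<forall>N>N0. N \<in> X \<longleftrightarrow> N \<in> Y"
  shows "(\<Sum>N\<in>Y. (2::nat) ^ N) < (\<Sum>N\<in>X. 2 ^ N)"
proof -
  let ?H = "{N. N > N0}"
  have Yeq: "Y = (Y \<inter> ?H) \<union> (Y \<inter> {..<N0})" using N0Y by (auto simp: not_less_iff_gr_or_eq)
  have "(\<Sum>N\<in>Y. (2::nat) ^ N) = (\<Sum>N\<in>(Y \<inter> ?H) \<union> (Y \<inter> {..<N0}). 2 ^ N)"
    by (rule arg_cong[OF Yeq])
  also have "\<dots> = (\<Sum>N\<in>Y \<inter> ?H. 2 ^ N) + (\<Sum>N\<in>Y \<inter> {..<N0}. 2 ^ N)"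
    by (rule sum.union_disjoint) (use Y in auto)
  also have "(\<Sum>N\<in>Y \<inter> {..<N0}. (2::nat) ^ N) \<le> (\<Sum>N<N0. 2 ^ N)" by (rule sum_mono2) auto
  also have "Y \<inter> ?H = X \<inter> ?H" using hi by auto
  finally have a: "(\<Sum>N\<in>Y. (2::nat) ^ N) \<le> (\<Sum>N\<in>X \<inter> ?H. 2 ^ N) + (\<Sum>N<N0. 2 ^ N)" by simp
  have "(\<Sum>N\<in>X \<inter> ?H. (2::nat) ^ N) + 2 ^ N0 = (\<Sum>N\<in>insert N0 (X \<inter> ?H). 2 ^ N)"
    using X by simp
  also have "\<dots> \<le> (\<Sum>N\<in>X. 2 ^ N)" using X N0X by (intro sum_mono2) auto
  finally show ?thesis using a sum_pow2_less[of N0] by linarith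
qed

definition inv3 :: "nat \<Rightarrow> nat \<Rightarrow> nat \<Rightarrow> 'a::field poly mat \<Rightarrow> bool" where
  "inv3 m n D P \<longleftrightarrow> P \<in> carrier_mat m n \<and> rows_nz P
     \<and> (\<forall>a b. a < b \<and> b < m \<longrightarrow> lp n (rw P a) mod n < lp n (rw P b) mod n)
     \<and> (\<forall>a<m. tc n (rw P a) (lp n (rw P a)) = 1) \<and> degle D P"

definition reduced :: "nat \<Rightarrow> nat \<Rightarrow> 'a::zero poly mat \<Rightarrow> nat \<Rightarrow> bool" where
  "reduced m n P k \<longleftrightarrow> (\<forall>i<m. i \<noteq> k \<longrightarrow> (\<forall>t\<ge>lp n (rw P i) div n. coeff (P $$ (k, lp n (rw P i) mod n)) t = 0))"

definition mu :: "nat \<Rightarrow> (nat \<Rightarrow> 'a::zero poly) \<Rightarrow> nat" where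
  "mu n r = (\<Sum>N\<in>{N. tc n r N \<noteq> 0}. 2 ^ N)"

lemma inv3_lp:
  assumes "inv3 m n D P" "n > 0" "a < m"
  shows "tc n (rw P a) (lp n (rw P a)) \<noteq> 0" "bnd n (rw P a) (lp n (rw P a))"
  using row_lp[of P a] assms unfolding inv3_def by auto

lemma reduce_step:
  fixes P :: "'a::field poly mat"
  assumes inv: "inv3 m n D P" and n: "n > 0" and k: "k < m" and nr: "\<not> reduced m n P k"
  shows "\<exists>P'. inv3 m n D P' \<and> row_module P' = row_module P \<and> (\<forall>a<m. a \<noteq> k \<longrightarrow> (\<forall>j<n. P' $$ (a,j) = P $$ (a,j)))
     \<and> (\<forall>a<m. lp n (rw P' a) = lp n (rw P a)) \<and> mu n (rw P' k) < mu n (rw P k)"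
proof -
  have P: "P \<in> carrier_mat m n" and rnz: "rows_nz P" and inc: "\<forall>a b. a < b \<and> b < m \<longrightarrow> lp n (rw P a) mod n < lp n (rw P b) mod n"
    and one: "\<forall>a<m. tc n (rw P a) (lp n (rw P a)) = 1" and dg: "degle D P" using inv unfolding inv3_def by auto
  have dP: "dim_row P = m" "dim_col P = n" using P by auto
  have injp: "\<And>a b. a < m \<Longrightarrow> b < m \<Longrightarrow> a \<noteq> b \<Longrightarrow> lp n (rw P a) mod n \<noteq> lp n (rw P b) mod n"
    using inc by (metis less_irrefl nat_neq_iff)
  obtain i t where i: "i < m" "i \<noteq> k" and t: "t \<ge> lp n (rw P i) div n"
      and ct: "coeff (P $$ (k, lp n (rw P i) mod n)) t \<noteq> 0"
    using nr unfolding reduced_def by blast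
  define Li where "Li = lp n (rw P i)" define Lk where "Lk = lp n (rw P k)"
  have ti: "tc n (rw P i) Li = 1" "bnd n (rw P i) Li" using one inv3_lp[OF inv n i(1)] i unfolding Li_def by auto
  have tk: "tc n (rw P k) Lk \<noteq> 0" "bnd n (rw P k) Lk" using inv3_lp[OF inv n k] unfolding Lk_def by auto
  define N0 where "N0 = t * n + Li mod n"
  have tcN0: "tc n (rw P k) N0 = coeff (P $$ (k, Li mod n)) t" unfolding N0_def using n by (simp add: tc_at)
  define c where "c = tc n (rw P k) N0"
  have c0: "c \<noteq> 0" unfolding c_def tcN0 using ct Li_def by simp
  define e where "e = t - Li div n"
  define p where "p = - monom c e"
  have dp: "degree p = e" unfolding p_def using c0 by (simp add: degree_monom_eq)
  have cpe: "coeff p e = - c" unfolding p_def by simp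
  have LiN0: "Li + n * e = N0"
  proof -
    have "Li = Li div n * n + Li mod n" by simp
    moreover have "n * e = t * n - Li div n * n" unfolding e_def by (simp add: diff_mult_distrib2 mult.commute)
    moreover have "Li div n * n \<le> t * n" using t unfolding Li_def by simp
    ultimately show ?thesis unfolding N0_def by linarith
  qed
  have m1: "bnd n (\<lambda>j. p * rw P i j) N0" "tc n (\<lambda>j. p * rw P i j) N0 = - c"
    using tc_mult[OF n ti(2), of p] unfolding dp LiN0 using ti(1) cpe by auto
  have N0le: "N0 \<le> Lk" using tk(2) c0 unfolding bnd_def c_def using not_le by blast
  have N0ne: "N0 \<noteq> Lk"
  proof
    assume "N0 = Lk"
    moreover have "(t * n + Li mod n) mod n = Li mod n" by simp
    ultimately have "Li mod n = Lk mod n" unfolding N0_def by simp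
    then show False using injp[OF i(1) k i(2)] unfolding Li_def Lk_def by simp
  qed
  define P' where "P' = addrow k i p P"
  have P'c: "P' \<in> carrier_mat m n" unfolding P'_def using P by auto
  have dP': "dim_row P' = m" "dim_col P' = n" using P'c by auto
  have rm: "row_module P' = row_module P" unfolding P'_def using rowmod_addrow[of k i P p] i k dP by auto
  have rowk: "\<And>j. j < n \<Longrightarrow> rw P' k j = rw P k j + p * rw P i j"
    unfolding P'_def using k dP by (simp add: addrow_index)
  have rowo: "\<And>a j. a < m \<Longrightarrow> a \<noteq> k \<Longrightarrow> j < n \<Longrightarrow> rw P' a j = rw P a j"
    unfolding P'_def using dP by (simp add: addrow_index)
  have tck: "tc n (rw P' k) N = tc n (rw P k) N + tc n (\<lambda>j. p * rw P i j) N" for N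
    using tc_cong[where N=N, OF n rowk] tc_add[of n "rw P k" "\<lambda>j. p * rw P i j" N] by simp
  have hi: "tc n (rw P' k) N = tc n (rw P k) N" if "N > N0" for N
    using tck m1(1) that unfolding bnd_def by simp
  have at0: "tc n (rw P' k) N0 = 0" using tck m1(2) unfolding c_def by simp
  have tk': "tc n (rw P' k) Lk \<noteq> 0" "bnd n (rw P' k) Lk"
    using hi[of Lk] N0le N0ne tk hi unfolding bnd_def by auto
  have lpk: "lp n (rw P' k) = Lk" using lp_unique[OF n tk'] .
  have lpo: "lp n (rw P' a) = lp n (rw P a)" if "a < m" "a \<noteq> k" for a
    by (rule lp_cong[OF n]) (rule rowo[OF that])
  have lpall: "\<forall>a<m. lp n (rw P' a) = lp n (rw P a)" using lpk lpo unfolding Lk_def by metis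
  have rnz': "rows_nz P'" unfolding rows_nz_def dP'
  proof (intro allI impI)
    fix a assume a: "a < m"
    show "\<exists>j<n. P' $$ (a, j) \<noteq> 0"
    proof (cases "a = k")
      case True
      have "Lk mod n < n" using n by simp
      then show ?thesis using tc_nz_entry[OF n tk'(1)] True by blast
    next
      case False
      then obtain j where "j < n" "P $$ (a,j) \<noteq> 0" using rnz a dP unfolding rows_nz_def by auto
      then show ?thesis using rowo[OF a False] by auto
    qed
  qed
  have one': "\<forall>a<m. tc n (rw P' a) (lp n (rw P' a)) = 1"
  proof (intro allI impI)
    fix a assume a: "a < m"
    show "tc n (rw P' a) (lp n (rw P' a)) = 1"
    proof (cases "a = k")
      case True
      then show ?thesis using lpk hi[of Lk] N0le N0ne one k unfolding Lk_def by auto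
    next
      case False
      then show ?thesis using lpo[OF a False] tc_cong[OF n rowo[OF a False]] one a by simp
    qed
  qed
  have dg': "degle D P'" unfolding degle_def dP'
  proof (intro allI impI)
    fix a j assume a: "a < m" and j: "j < n"
    show "degree (P' $$ (a, j)) \<le> D"
    proof (cases "a = k")
      case True
      have "degree (rw P' k j) \<le> Lk div n" using bnd_degree[OF n tk'(2) j] .
      also have "Lk div n \<le> D" unfolding Lk_def using lp_div_le_D[OF rnz, of k D] k n dP dg by simp
      finally show ?thesis using True by simp
    next
      case False then show ?thesis using rowo[OF a False j] dg a j dP unfolding degle_def by simp
    qed
  qed
  have inv': "inv3 m n D P'" unfolding inv3_def using P'c rnz' one' dg' inc lpall by simp
  have mu: "mu n (rw P' k) < mu n (rw P k)" unfolding mu_def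
  proof (rule pow2_sum_less)
    show "finite {N. tc n (rw P k) N \<noteq> 0}" by (rule tc_finite[OF n])
    show "finite {N. tc n (rw P' k) N \<noteq> 0}" by (rule tc_finite[OF n])
    show "N0 \<in> {N. tc n (rw P k) N \<noteq> 0}" using c0 unfolding c_def by simp
    show "N0 \<notin> {N. tc n (rw P' k) N \<noteq> 0}" using at0 by simp
    show "\<forall>N>N0. (N \<in> {N. tc n (rw P k) N \<noteq> 0}) = (N \<in> {N. tc n (rw P' k) N \<noteq> 0})" using hi by simp
  qed
  show ?thesis using inv' rm rowo lpall mu by blast
qed

lemma reduce_row:
  fixes P :: "'a::field poly mat"
  shows "inv3 m n D P \<Longrightarrow> n > 0 \<Longrightarrow> k < m \<Longrightarrow>
    \<exists>Q. inv3 m n D Q \<and> row_module Q = row_module P \<and> (\<forall>a<m. a \<noteq> k \<longrightarrow> (\<forall>j<n. Q $$ (a,j) = P $$ (a,j)))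
     \<and> (\<forall>a<m. lp n (rw Q a) = lp n (rw P a)) \<and> reduced m n Q k"
proof (induction "mu n (rw P k)" arbitrary: P rule: less_induct)
  case less
  show ?case
  proof (cases "reduced m n P k")
    case True then show ?thesis using less.prems by blast
  next
    case False
    from reduce_step[OF less.prems(1,2,3) False] obtain P' where
      P': "inv3 m n D P'" "row_module P' = row_module P" "\<forall>a<m. a \<noteq> k \<longrightarrow> (\<forall>j<n. P' $$ (a,j) = P $$ (a,j))"
        "\<forall>a<m. lp n (rw P' a) = lp n (rw P a)" "mu n (rw P' k) < mu n (rw P k)" by blast
    from less.hyps[OF P'(5) P'(1) less.prems(2,3)] obtain Q where
      Q: "inv3 m n D Q" "row_module Q = row_module P'" "\<forall>a<m. a \<noteq> k \<longrightarrow> (\<forall>j<n. Q $$ (a,j) = P' $$ (a,j))"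
        "\<forall>a<m. lp n (rw Q a) = lp n (rw P' a)" "reduced m n Q k" by blast
    show ?thesis using Q P' by auto
  qed
qed

lemma reduced_cong:
  assumes n: "n > 0" and same: "\<forall>j<n. Q $$ (k,j) = P $$ (k,j)" and lps: "\<forall>a<m. lp n (rw Q a) = lp n (rw P a)"
    and r: "reduced m n P k"
  shows "reduced m n Q k"
  unfolding reduced_def
proof (intro allI impI)
  fix i t assume i: "i < m" "i \<noteq> k" and t: "lp n (rw Q i) div n \<le> t"
  have "lp n (rw Q i) mod n < n" using n by simp
  then show "coeff (Q $$ (k, lp n (rw Q i) mod n)) t = 0"
    using r i t same lps unfolding reduced_def by simp
qed

lemma reduce_all:
  fixes P :: "'a::field poly mat"
  assumes inv: "inv3 m n D P" and n: "n > 0"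
  shows "s \<le> m \<Longrightarrow> \<exists>Q. inv3 m n D Q \<and> row_module Q = row_module P
     \<and> (\<forall>a<m. lp n (rw Q a) = lp n (rw P a)) \<and> (\<forall>k<s. reduced m n Q k)"
proof (induction s)
  case 0 then show ?case using inv by blast
next
  case (Suc s)
  then obtain Q where Q: "inv3 m n D Q" "row_module Q = row_module P"
     "\<forall>a<m. lp n (rw Q a) = lp n (rw P a)" "\<forall>k<s. reduced m n Q k" by auto
  have s: "s < m" using Suc by simp
  from reduce_row[OF Q(1) n s] obtain Q' where
    Q': "inv3 m n D Q'" "row_module Q' = row_module Q" "\<forall>a<m. a \<noteq> s \<longrightarrow> (\<forall>j<n. Q' $$ (a,j) = Q $$ (a,j))"
     "\<forall>a<m. lp n (rw Q' a) = lp n (rw Q a)" "reduced m n Q' s" by blast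
  have "\<forall>k<Suc s. reduced m n Q' k"
  proof (intro allI impI)
    fix k assume k: "k < Suc s"
    show "reduced m n Q' k"
    proof (cases "k = s")
      case True then show ?thesis using Q'(5) by simp
    next
      case False
      then have "k < s" using k by simp
      then show ?thesis using reduced_cong[OF n _ Q'(4) Q(4)[rule_format, OF \<open>k < s\<close>]] Q'(3) s False by auto
    qed
  qed
  then show ?case using Q Q' by auto
qed



lemma finite_deg_set: "finite {degree (M $$ (i, j)) |i j. i < dim_row M \<and> j < dim_col M}"
proof -
  have "{degree (M $$ (i, j)) |i j. i < dim_row M \<and> j < dim_col M} \<subseteq> (\<lambda>(i,j). degree (M $$ (i,j))) ` ({..<dim_row M} \<times> {..<dim_col M})"
    by auto
  then show ?thesis using finite_subset by blast
qed

lemma mat_deg_le: "degle D M \<Longrightarrow> mat_deg M \<le> D"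
  unfolding mat_deg_def degle_def
  by (rule Max.boundedI) (use finite_deg_set in auto)

lemma degle_mat_deg: "degle (mat_deg M) M"
  unfolding degle_def mat_deg_def
proof (intro allI impI)
  fix i j assume "i < dim_row M" "j < dim_col M"
  then show "degree (M $$ (i, j)) \<le> Max ({degree (M $$ (i, j)) |i j. i < dim_row M \<and> j < dim_col M} \<union> {0})"
    by (intro Max_ge) (use finite_deg_set in auto)
qed

lemma stage2:
  fixes P :: "'a::field poly mat"
  assumes P: "P \<in> carrier_mat m n" and n: "n > 0" and wp: "wpop P" and dg: "degle D P"
  shows "\<exists>Q. inv3 m n D Q \<and> row_module Q = row_module P"
proof -
  have dP: "dim_row P = m" "dim_col P = n" using P by auto
  have rnz: "rows_nz P" and inj: "inj_on (\<lambda>i. lp n (rw P i) mod n) {..<m}" using wp dP unfolding wpop_def by auto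
  define \<pi> where "\<pi> = (\<lambda>i. lp n (rw P i) mod n)"
  define s where "s = sorted_list_of_set (\<pi> ` {..<m})"
  have ss: "sorted_wrt (<) s" unfolding s_def by (rule strict_sorted_list_of_set)
  have sset: "set s = \<pi> ` {..<m}" unfolding s_def by simp
  have slen: "length s = m" unfolding s_def using card_image[OF inj] \<pi>_def by simp
  define \<sigma> where "\<sigma> = (\<lambda>a. inv_into {..<m} \<pi> (s ! a))"
  have sig: "\<sigma> a < m \<and> \<pi> (\<sigma> a) = s ! a" if a: "a < m" for a
  proof -
    have h: "s ! a \<in> \<pi> ` {..<m}" using a slen sset nth_mem by metis
    show ?thesis unfolding \<sigma>_def using inv_into_into[OF h] f_inv_into_f[OF h] by simp
  qed
  have sinc: "\<pi> (\<sigma> a) < \<pi> (\<sigma> b)" if "a < b" "b < m" for a b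
    using sig[of a] sig[of b] that sorted_wrt_nth_less[OF ss that(1)] slen by simp
  have sinj: "inj_on \<sigma> {..<m}"
  proof (rule inj_onI)
    fix a b assume a: "a \<in> {..<m}" and b: "b \<in> {..<m}" and e: "\<sigma> a = \<sigma> b"
    show "a = b"
    proof (rule ccontr)
      assume "a \<noteq> b"
      then consider "a < b" | "b < a" by linarith
      then show False using sinc a b e by (cases) (metis lessThan_iff less_irrefl)+
    qed
  qed
  have sbij: "bij_betw \<sigma> {..<m} {..<m}" unfolding bij_betw_def
    using sinj endo_inj_surj[of "{..<m}" \<sigma>] sig by auto
  define c where "c = (\<lambda>a. 1 / tc n (rw P (\<sigma> a)) (lp n (rw P (\<sigma> a))))"
  have tcs: "tc n (rw P (\<sigma> a)) (lp n (rw P (\<sigma> a))) \<noteq> 0" "bnd n (rw P (\<sigma> a)) (lp n (rw P (\<sigma> a)))" if "a < m" for a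
    using row_lp[OF rnz] sig[OF that] n dP by auto
  have c0: "\<forall>a<m. c a \<noteq> 0" unfolding c_def using tcs by simp
  define Q where "Q = permscale m n \<sigma> c P"
  have Qc: "Q \<in> carrier_mat m n" unfolding Q_def permscale_def by simp
  have Qrw: "\<And>a j. a < m \<Longrightarrow> j < n \<Longrightarrow> rw Q a j = Polynomial.smult (c a) (rw P (\<sigma> a) j)"
    unfolding Q_def permscale_def by simp
  have tcQ: "tc n (rw Q a) N = c a * tc n (rw P (\<sigma> a)) N" if a: "a < m" for a N
    using tc_cong[where N=N, OF n Qrw[OF a]] tc_smult[of n "c a" "rw P (\<sigma> a)" N] by simp
  have lpQ: "lp n (rw Q a) = lp n (rw P (\<sigma> a))" if a: "a < m" for a
  proof (rule lp_unique[OF n])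
    show "tc n (rw Q a) (lp n (rw P (\<sigma> a))) \<noteq> 0" using tcQ[OF a] c0 tcs[OF a] a by simp
    show "bnd n (rw Q a) (lp n (rw P (\<sigma> a)))" using tcs(2)[OF a] tcQ[OF a] unfolding bnd_def by simp
  qed
  have inv: "inv3 m n D Q" unfolding inv3_def
  proof (intro conjI)
    show "Q \<in> carrier_mat m n" by (rule Qc)
    show "rows_nz Q" unfolding rows_nz_def using Qc
    proof (intro allI impI)
      fix a assume a: "a < dim_row Q"
      then have a': "a < m" using Qc by simp
      obtain j where "j < n" "P $$ (\<sigma> a, j) \<noteq> 0" using rnz sig[OF a'] dP unfolding rows_nz_def by auto
      then show "\<exists>j<dim_col Q. Q $$ (a, j) \<noteq> 0" using Qrw[OF a'] c0 a' Qc by auto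
    qed
    show "\<forall>a b. a < b \<and> b < m \<longrightarrow> lp n (rw Q a) mod n < lp n (rw Q b) mod n"
      using sinc lpQ unfolding \<pi>_def by simp
    show "\<forall>a<m. tc n (rw Q a) (lp n (rw Q a)) = 1"
      using tcQ lpQ tcs unfolding c_def by simp
    show "degle D Q" unfolding degle_def
    proof (intro allI impI)
      fix a j assume "a < dim_row Q" "j < dim_col Q"
      then have a: "a < m" and j: "j < n" using Qc by auto
      have "degree (Q $$ (a,j)) \<le> degree (P $$ (\<sigma> a, j))" using Qrw[OF a j] degree_smult_le by simp
      also have "\<dots> \<le> D" using dg sig[OF a] j dP unfolding degle_def by simp
      finally show "degree (Q $$ (a,j)) \<le> D" .
    qed
  qed
  have "row_module Q = row_module P" unfolding Q_def by (rule rowmod_permscale[OF P sbij c0])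
  then show ?thesis using inv by blast
qed

lemma inv3_popov:
  fixes Q :: "'a::field poly mat"
  assumes inv: "inv3 m n D Q" and n: "n > 0" and red: "\<forall>k<m. reduced m n Q k"
  shows "is_popov Q" "\<And>a. a < m \<Longrightarrow> row_deg Q a = lp n (rw Q a) div n"
    "\<And>a. a < m \<Longrightarrow> pivot_index Q a = lp n (rw Q a) mod n"
proof -
  have Qc: "Q \<in> carrier_mat m n" and inc: "\<forall>a b. a < b \<and> b < m \<longrightarrow> lp n (rw Q a) mod n < lp n (rw Q b) mod n"
    and one: "\<forall>a<m. tc n (rw Q a) (lp n (rw Q a)) = 1" using inv unfolding inv3_def by auto
  have dQ: "dim_row Q = m" "dim_col Q = n" using Qc by auto
  note L = inv3_lp[OF inv n]
  have lk: "row_deg Q a = lp n (rw Q a) div n" "pivot_index Q a = lp n (rw Q a) mod n" "\<not> zero_row Q a"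
    if a: "a < m" for a
    using link[of Q a "lp n (rw Q a)"] L[OF a] dQ n by auto
  then show "\<And>a. a < m \<Longrightarrow> row_deg Q a = lp n (rw Q a) div n"
    "\<And>a. a < m \<Longrightarrow> pivot_index Q a = lp n (rw Q a) mod n" by auto
  have dg: "degree (Q $$ (a, lp n (rw Q a) mod n)) = lp n (rw Q a) div n" if a: "a < m" for a
    using tc_lp_degree(1)[OF n L[OF a]] by simp
  show "is_popov Q" unfolding is_popov_def
  proof (intro conjI allI impI)
    show "no_zero_row Q" unfolding no_zero_row_def using lk dQ by auto
    fix i i' assume "i < i' \<and> i' < dim_row Q"
    then show "pivot_index Q i < pivot_index Q i'" using inc lk dQ by auto
  next
    fix i assume i: "i < dim_row Q"
    then have i': "i < m" using dQ by simp
    have "lead_coeff (Q $$ (i, pivot_index Q i)) = coeff (Q $$ (i, lp n (rw Q i) mod n)) (lp n (rw Q i) div n)"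
      using lk[OF i'] dg[OF i'] by simp
    also have "\<dots> = 1" using one i' unfolding tc_def by simp
    finally show "lead_coeff (Q $$ (i, pivot_index Q i)) = 1" .
  next
    fix i k assume i: "i < dim_row Q" and k: "k < dim_row Q" and ki: "k \<noteq> i"
    then have i': "i < m" and k': "k < m" using dQ by auto
    have "\<forall>t\<ge>lp n (rw Q i) div n. coeff (Q $$ (k, lp n (rw Q i) mod n)) t = 0"
      using red k' i' ki unfolding reduced_def by auto
    then have "Q $$ (k, lp n (rw Q i) mod n) = 0 \<or> degree (Q $$ (k, lp n (rw Q i) mod n)) < lp n (rw Q i) div n"
      by (rule small_coeffs)
    then show "Q $$ (k, pivot_index Q i) = 0 \<or> degree (Q $$ (k, pivot_index Q i)) < degree (Q $$ (i, pivot_index Q i))"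
      using lk[OF i'] dg[OF i'] by simp
  qed
qed

lemma popov_exists:
  fixes A :: "'a::field poly mat"
  assumes A: "A \<in> carrier_mat m n" and n: "n > 0" and fr: "full_row_rank A"
  shows "\<exists>P. P \<in> carrier_mat m n \<and> is_popov P \<and> row_module P = row_module A \<and> mat_deg P \<le> mat_deg A"
proof -
  from stage1[OF A n fr degle_mat_deg] obtain Q1 where
    Q1: "Q1 \<in> carrier_mat m n" "row_module Q1 = row_module A" "degle (mat_deg A) Q1" "wpop Q1" by blast
  from stage2[OF Q1(1) n Q1(4) Q1(3)] obtain Q2 where Q2: "inv3 m n (mat_deg A) Q2" "row_module Q2 = row_module Q1" by blast
  from reduce_all[OF Q2(1) n, of m] obtain Q3 where
    Q3: "inv3 m n (mat_deg A) Q3" "row_module Q3 = row_module Q2" "\<forall>k<m. reduced m n Q3 k" by auto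
  have "is_popov Q3" using inv3_popov[OF Q3(1) n Q3(3)] by simp
  moreover have "mat_deg Q3 \<le> mat_deg A" using Q3(1) unfolding inv3_def by (auto intro: mat_deg_le)
  moreover have "Q3 \<in> carrier_mat m n" using Q3(1) unfolding inv3_def by simp
  ultimately show ?thesis using Q1 Q2 Q3 by auto
qed



lemma popov_facts:
  fixes P :: "'a::field poly mat"
  assumes pop: "is_popov P" and n: "dim_col P = n" "n > 0"
  shows "\<And>a. a < dim_row P \<Longrightarrow> tc n (rw P a) (lp n (rw P a)) \<noteq> 0 \<and> bnd n (rw P a) (lp n (rw P a))"
    and "\<And>a. a < dim_row P \<Longrightarrow> row_deg P a = lp n (rw P a) div n \<and> pivot_index P a = lp n (rw P a) mod n"
    and "\<And>a b. a < b \<Longrightarrow> b < dim_row P \<Longrightarrow> lp n (rw P a) mod n < lp n (rw P b) mod n"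
    and "\<And>a b t. a < dim_row P \<Longrightarrow> b < dim_row P \<Longrightarrow> t \<ge> lp n (rw P a) div n \<Longrightarrow>
           coeff (P $$ (b, lp n (rw P a) mod n)) t = (if b = a \<and> t = lp n (rw P a) div n then 1 else 0)"
proof -
  have nz: "\<not> zero_row P a" if "a < dim_row P" for a using pop that unfolding is_popov_def no_zero_row_def by auto
  show L: "tc n (rw P a) (lp n (rw P a)) \<noteq> 0 \<and> bnd n (rw P a) (lp n (rw P a))" if a: "a < dim_row P" for a
  proof -
    obtain j where "j < n" "P $$ (a,j) \<noteq> 0" using nz[OF a] n unfolding zero_row_def by auto
    then show ?thesis using lp_props[OF n(2), of j "rw P a"] by auto
  qed
  show lk: "row_deg P a = lp n (rw P a) div n \<and> pivot_index P a = lp n (rw P a) mod n" if a: "a < dim_row P" for a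
    using link[of P a "lp n (rw P a)"] L[OF a] n by auto
  show "lp n (rw P a) mod n < lp n (rw P b) mod n" if "a < b" "b < dim_row P" for a b
  proof -
    have "a < dim_row P" using that by simp
    moreover have "pivot_index P a < pivot_index P b" using pop that unfolding is_popov_def by blast
    ultimately show ?thesis using lk[of a] lk[of b] that by simp
  qed
  fix a b t assume a: "a < dim_row P" and b: "b < dim_row P" and t: "t \<ge> lp n (rw P a) div n"
  have dg: "degree (P $$ (a, lp n (rw P a) mod n)) = lp n (rw P a) div n"
    using tc_lp_degree(1)[OF n(2)] L[OF a] by auto
  have lc: "lead_coeff (P $$ (a, lp n (rw P a) mod n)) = 1" using pop a lk[OF a] unfolding is_popov_def by auto
  show "coeff (P $$ (b, lp n (rw P a) mod n)) t = (if b = a \<and> t = lp n (rw P a) div n then 1 else 0)"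
  proof (cases "b = a")
    case True
    show ?thesis
    proof (cases "t = lp n (rw P a) div n")
      case True then show ?thesis using \<open>b = a\<close> lc dg by simp
    next
      case False then have "t > degree (P $$ (a, lp n (rw P a) mod n))" using t dg by simp
      then show ?thesis using \<open>b = a\<close> False by (simp add: coeff_eq_0)
    qed
  next
    case False
    have "P $$ (b, pivot_index P a) = 0 \<or> degree (P $$ (b, pivot_index P a)) < degree (P $$ (a, pivot_index P a))"
      using pop a b False unfolding is_popov_def by auto
    then have "P $$ (b, lp n (rw P a) mod n) = 0 \<or> degree (P $$ (b, lp n (rw P a) mod n)) < lp n (rw P a) div n"
      using lk[OF a] dg by simp
    then show ?thesis using False t by (auto simp: coeff_eq_0)
  qed
qed

lemma tc_zero_fun: "tc n (\<lambda>j. 0 * r j) N = 0"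
  unfolding tc_def by simp

lemma PLP:
  fixes R :: "nat \<Rightarrow> nat \<Rightarrow> 'a::field poly"
  assumes n: "n > 0" and RL: "\<And>i. i < k \<Longrightarrow> tc n (R i) (L i) \<noteq> 0 \<and> bnd n (R i) (L i)"
    and inj: "inj_on (\<lambda>i. L i mod n) {..<k}" and u: "\<exists>i<k. u i \<noteq> 0"
  shows "\<exists>i<k. u i \<noteq> 0 \<and> tc n (\<lambda>j. \<Sum>i<k. u i * R i j) (L i + n * degree (u i)) \<noteq> 0
           \<and> bnd n (\<lambda>j. \<Sum>i<k. u i * R i j) (L i + n * degree (u i))"
proof -
  define S where "S = {i. i < k \<and> u i \<noteq> 0}"
  define f where "f = (\<lambda>i. L i + n * degree (u i))"
  have fS: "finite S" "S \<noteq> {}" unfolding S_def using u by auto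
  define M where "M = Max (f ` S)"
  have "M \<in> f ` S" unfolding M_def using fS by (intro Max_in) auto
  then obtain i0 where i0: "i0 \<in> S" "f i0 = M" by auto
  have fle: "f i \<le> M" if "i \<in> S" for i unfolding M_def using fS that by simp
  have flt: "f i < M" if "i \<in> S" "i \<noteq> i0" for i
  proof -
    have "f i mod n = L i mod n" "f i0 mod n = L i0 mod n" unfolding f_def by simp_all
    moreover have "L i mod n \<noteq> L i0 mod n" using inj that i0(1) unfolding S_def inj_on_def by auto
    ultimately have "f i \<noteq> f i0" by metis
    then show ?thesis using fle[OF that(1)] i0 by simp
  qed
  have tcs: "tc n (\<lambda>j. \<Sum>i<k. u i * R i j) N = (\<Sum>i<k. tc n (\<lambda>j. u i * R i j) N)" for N
    by (rule tc_sum)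
  have term_bnd: "bnd n (\<lambda>j. u i * R i j) (f i)" "tc n (\<lambda>j. u i * R i j) (f i) = lead_coeff (u i) * tc n (R i) (L i)"
    if "i < k" for i
    using tc_mult[OF n, of "R i" "L i" "u i"] RL[OF that] unfolding f_def by auto
  have zero_term: "tc n (\<lambda>j. u i * R i j) N = 0" if "i < k" "i \<notin> S" for i N
    using that unfolding S_def tc_def by simp
  have "bnd n (\<lambda>j. \<Sum>i<k. u i * R i j) M" unfolding bnd_def
  proof (intro allI impI)
    fix N assume N: "N > M"
    have "(\<Sum>i<k. tc n (\<lambda>j. u i * R i j) N) = 0"
    proof (rule sum.neutral, intro ballI)
      fix i assume i: "i \<in> {..<k}"
      show "tc n (\<lambda>j. u i * R i j) N = 0"
      proof (cases "i \<in> S")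
        case True then show ?thesis using term_bnd(1)[of i] i fle[OF True] N unfolding bnd_def by auto
      next
        case False then show ?thesis using zero_term i by simp
      qed
    qed
    then show "tc n (\<lambda>j. \<Sum>i<k. u i * R i j) N = 0" using tcs by simp
  qed
  moreover have "tc n (\<lambda>j. \<Sum>i<k. u i * R i j) M \<noteq> 0"
  proof -
    have "(\<Sum>i<k. tc n (\<lambda>j. u i * R i j) M) = (\<Sum>i<k. if i = i0 then lead_coeff (u i0) * tc n (R i0) (L i0) else 0)"
    proof (rule sum.cong[OF refl])
      fix i assume i: "i \<in> {..<k}"
      show "tc n (\<lambda>j. u i * R i j) M = (if i = i0 then lead_coeff (u i0) * tc n (R i0) (L i0) else 0)"
      proof (cases "i = i0")
        case True then show ?thesis using term_bnd(2)[of i0] i0 i by simp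
      next
        case False
        show ?thesis
        proof (cases "i \<in> S")
          case True then show ?thesis using term_bnd(1)[of i] i flt[OF True False] False unfolding bnd_def by auto
        next
          case F: False then show ?thesis using zero_term i False by simp
        qed
      qed
    qed
    also have "\<dots> = lead_coeff (u i0) * tc n (R i0) (L i0)" using i0(1) unfolding S_def by simp
    also have "\<dots> \<noteq> 0" using i0(1) RL unfolding S_def by auto
    finally show ?thesis using tcs by simp
  qed
  ultimately show ?thesis using i0 unfolding S_def f_def by auto
qed



lemma row_comb:
  fixes P Q :: "'a::field poly mat"
  assumes sub: "row_module Q \<subseteq> row_module P" and b: "b < dim_row Q" and cols: "dim_col Q = dim_col P"
  shows "\<exists>u. \<forall>j<dim_col P. Q $$ (b,j) = (\<Sum>a<dim_row P. P $$ (a,j) * u a)"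
proof -
  define v where "v = vec (dim_col Q) (\<lambda>j. Q $$ (b,j))"
  obtain u where u: "\<forall>j<dim_col Q. Q $$ (b,j) = (\<Sum>a<dim_row Q. Q $$ (a,j) * u a)" using row_in_rowmod[OF b] by blast
  have "\<forall>j<dim_col Q. v $ j = (\<Sum>a<dim_row Q. Q $$ (a,j) * u a)" unfolding v_def using u by simp
  moreover have "v \<in> carrier_vec (dim_col Q)" unfolding v_def by simp
  ultimately have "v \<in> row_module Q" unfolding rowmod_iff by blast
  then have "v \<in> row_module P" using sub by blast
  then obtain w where w: "\<forall>j<dim_col P. v $ j = (\<Sum>a<dim_row P. P $$ (a,j) * w a)" unfolding rowmod_iff by blast
  have "\<forall>j<dim_col P. Q $$ (b,j) = (\<Sum>a<dim_row P. P $$ (a,j) * w a)" using w cols unfolding v_def by simp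
  then show ?thesis by (rule exI[where x=w])
qed

lemma lp_of_comb:
  fixes P :: "'a::field poly mat"
  assumes pop: "is_popov P" and n: "dim_col P = n" "n > 0"
    and v: "\<And>j. j < n \<Longrightarrow> v j = (\<Sum>a<dim_row P. P $$ (a,j) * u a)" and u: "\<exists>a<dim_row P. u a \<noteq> 0"
  shows "\<exists>a<dim_row P. u a \<noteq> 0 \<and> tc n v (lp n (rw P a) + n * degree (u a)) \<noteq> 0
     \<and> lp n v = lp n (rw P a) + n * degree (u a)"
proof -
  note F = popov_facts[OF pop n]
  have inj: "inj_on (\<lambda>i. lp n (rw P i) mod n) {..<dim_row P}"
  proof (rule inj_onI)
    fix a b assume a: "a \<in> {..<dim_row P}" and b: "b \<in> {..<dim_row P}" and e: "lp n (rw P a) mod n = lp n (rw P b) mod n"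
    show "a = b"
    proof (rule ccontr)
      assume "a \<noteq> b"
      then consider "a < b" | "b < a" by linarith
      then show False using F(3) a b e by (cases) (metis lessThan_iff less_irrefl)+
    qed
  qed
  have vv: "\<And>j. j < n \<Longrightarrow> v j = (\<Sum>a<dim_row P. u a * rw P a j)" using v by (simp add: mult.commute)
  from PLP[OF n(2), of "dim_row P" "rw P" "\<lambda>a. lp n (rw P a)" u] F(1) inj u
  obtain a where a: "a < dim_row P" "u a \<noteq> 0"
    and t: "tc n (\<lambda>j. \<Sum>i<dim_row P. u i * rw P i j) (lp n (rw P a) + n * degree (u a)) \<noteq> 0"
    and bd: "bnd n (\<lambda>j. \<Sum>i<dim_row P. u i * rw P i j) (lp n (rw P a) + n * degree (u a))" by blast
  have t': "tc n v (lp n (rw P a) + n * degree (u a)) \<noteq> 0" using t tc_cong[OF n(2) vv] by simp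
  have b': "bnd n v (lp n (rw P a) + n * degree (u a))" using bd bnd_cong[OF n(2) vv] by simp
  show ?thesis using a t' lp_unique[OF n(2) t' b'] by blast
qed

lemma step1:
  fixes P Q :: "'a::field poly mat"
  assumes popP: "is_popov P" and popQ: "is_popov Q" and nP: "dim_col P = n" and nQ: "dim_col Q = n" and n: "n > 0"
    and sub: "row_module Q \<subseteq> row_module P" and b: "b < dim_row Q"
  shows "\<exists>a<dim_row P. lp n (rw Q b) mod n = lp n (rw P a) mod n \<and> lp n (rw P a) div n \<le> lp n (rw Q b) div n"
proof -
  obtain u where u: "\<forall>j<n. Q $$ (b,j) = (\<Sum>a<dim_row P. P $$ (a,j) * u a)"
    using row_comb[OF sub b] nP nQ by auto
  have "\<exists>a<dim_row P. u a \<noteq> 0"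
  proof (rule ccontr)
    assume "\<not> ?thesis"
    then have "\<forall>j<n. Q $$ (b,j) = 0" using u by simp
    then have "zero_row Q b" unfolding zero_row_def using nQ by simp
    then show False using popQ b unfolding is_popov_def no_zero_row_def by auto
  qed
  from lp_of_comb[OF popP nP n, of "rw Q b" u] u this
  obtain a where a: "a < dim_row P" and e: "lp n (rw Q b) = lp n (rw P a) + n * degree (u a)" by auto
  have "lp n (rw Q b) mod n = lp n (rw P a) mod n" using e by simp
  moreover have "lp n (rw P a) div n \<le> lp n (rw Q b) div n" using e n by simp
  ultimately show ?thesis using a by blast
qed

lemma strict_same_image:
  fixes f g :: "nat \<Rightarrow> nat"
  assumes f: "\<And>a b. a < b \<Longrightarrow> b < k \<Longrightarrow> f a < f b" and g: "\<And>a b. a < b \<Longrightarrow> b < l \<Longrightarrow> g a < g b"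
    and im: "f ` {..<k} = g ` {..<l}"
  shows "k = l \<and> (\<forall>a<k. f a = g a)"
proof -
  have sf: "sorted_wrt (<) (map f [0..<k])" unfolding sorted_wrt_iff_nth_less using f by simp
  have sg: "sorted_wrt (<) (map g [0..<l])" unfolding sorted_wrt_iff_nth_less using g by simp
  have "set (map f [0..<k]) = set (map g [0..<l])" using im by (simp add: atLeast0LessThan)
  then have "map f [0..<k] = map g [0..<l]" using strict_sorted_equal[OF sg sf] by simp
  then have "length (map f [0..<k]) = length (map g [0..<l])" "\<forall>a<k. map f [0..<k] ! a = map g [0..<l] ! a" by simp_all
  then show ?thesis by simp
qed

lemma popov_unique:
  fixes P Q :: "'a::field poly mat"
  assumes popP: "is_popov P" and popQ: "is_popov Q" and nP: "dim_col P = n" and nQ: "dim_col Q = n" and n: "n > 0"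
    and eq: "row_module Q = row_module P"
  shows "Q = P"
proof -
  define k where "k = dim_row P" define l where "l = dim_row Q"
  define LP where "LP = (\<lambda>a. lp n (rw P a))" define LQ where "LQ = (\<lambda>a. lp n (rw Q a))"
  note FP0 = popov_facts[OF popP nP n, folded k_def]
  note FQ0 = popov_facts[OF popQ nQ n, folded l_def]
  have fp3: "\<And>a b. a < b \<Longrightarrow> b < k \<Longrightarrow> LP a mod n < LP b mod n" unfolding LP_def using FP0(3) by blast
  have fq3: "\<And>a b. a < b \<Longrightarrow> b < l \<Longrightarrow> LQ a mod n < LQ b mod n" unfolding LQ_def using FQ0(3) by blast
  have fp4: "\<And>a b t. a < k \<Longrightarrow> b < k \<Longrightarrow> t \<ge> LP a div n \<Longrightarrow>
           coeff (P $$ (b, LP a mod n)) t = (if b = a \<and> t = LP a div n then 1 else 0)" unfolding LP_def using FP0(4) by blast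
  have fq4: "\<And>a b t. a < l \<Longrightarrow> b < l \<Longrightarrow> t \<ge> LQ a div n \<Longrightarrow>
           coeff (Q $$ (b, LQ a mod n)) t = (if b = a \<and> t = LQ a div n then 1 else 0)" unfolding LQ_def using FQ0(4) by blast
  have s1: "\<And>b. b < l \<Longrightarrow> \<exists>a<k. LQ b mod n = LP a mod n \<and> LP a div n \<le> LQ b div n"
    using step1[OF popP popQ nP nQ n] eq unfolding k_def l_def LP_def LQ_def by auto
  have s2: "\<And>a. a < k \<Longrightarrow> \<exists>b<l. LP a mod n = LQ b mod n \<and> LQ b div n \<le> LP a div n"
    using step1[OF popQ popP nQ nP n] eq unfolding k_def l_def LP_def LQ_def by auto
  have "(\<lambda>a. LP a mod n) ` {..<k} = (\<lambda>b. LQ b mod n) ` {..<l}"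
  proof
    show "(\<lambda>a. LP a mod n) ` {..<k} \<subseteq> (\<lambda>b. LQ b mod n) ` {..<l}" using s2 by fastforce
    show "(\<lambda>b. LQ b mod n) ` {..<l} \<subseteq> (\<lambda>a. LP a mod n) ` {..<k}" using s1 by fastforce
  qed
  from strict_same_image[OF fp3 fq3 this] have kl: "k = l" and md: "\<forall>a<k. LP a mod n = LQ a mod n" by auto
  have injP: "\<And>a b. a < k \<Longrightarrow> b < k \<Longrightarrow> LP a mod n = LP b mod n \<Longrightarrow> a = b"
    using fp3 by (metis less_irrefl nat_neq_iff)
  have injQ: "\<And>a b. a < k \<Longrightarrow> b < k \<Longrightarrow> LQ a mod n = LQ b mod n \<Longrightarrow> a = b"
    using fq3 kl by (metis less_irrefl nat_neq_iff)
  have LPQ: "LP a = LQ a" if a: "a < k" for a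
  proof -
    obtain a' where a': "a' < k" "LQ a mod n = LP a' mod n" "LP a' div n \<le> LQ a div n" using s1[of a] a kl by auto
    have "a' = a" using injP[OF a'(1) a] a'(2) md a by simp
    obtain b' where b': "b' < l" "LP a mod n = LQ b' mod n" "LQ b' div n \<le> LP a div n" using s2[OF a] by auto
    have "b' = a" using injQ[of b' a] b'(1,2) md a kl by simp
    have "LP a div n = LQ a div n" using a'(3) b'(3) \<open>a' = a\<close> \<open>b' = a\<close> by simp
    then show ?thesis using md a by (metis div_mult_mod_eq)
  qed
  have coeq: "coeff (Q $$ (b, LP a mod n)) t = coeff (P $$ (b, LP a mod n)) t"
    if a: "a < k" and b: "b < k" and t: "t \<ge> LP a div n" for a b t
    using fp4[OF a b t] fq4[of a b t] LPQ[OF a] a b t kl by simp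
  have rows: "\<forall>j<n. Q $$ (b,j) = P $$ (b,j)" if b: "b < k" for b
  proof -
    have bQ: "b < dim_row Q" using b kl l_def by simp
    obtain u where u: "\<forall>j<n. Q $$ (b,j) = (\<Sum>a<k. P $$ (a,j) * u a)"
      using row_comb[of Q P b] eq bQ nP nQ unfolding k_def by auto
    define w where "w = (\<lambda>a. u a - (if a = b then 1 else 0))"
    have vw: "Q $$ (b,j) - P $$ (b,j) = (\<Sum>a<k. P $$ (a,j) * w a)" if j: "j < n" for j
    proof -
      have "(\<Sum>a<k. P $$ (a,j) * w a) = (\<Sum>a<k. P $$ (a,j) * u a) - (\<Sum>a<k. P $$ (a,j) * (if a = b then 1 else 0))"
        unfolding w_def by (simp add: right_diff_distrib sum_subtractf)
      also have "(\<Sum>a<k. P $$ (a,j) * (if a = b then 1 else 0)) = P $$ (b,j) * 1" by (rule sum_delta_mult[OF b])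
      finally show ?thesis using u j by simp
    qed
    show ?thesis
    proof (cases "\<exists>a<k. w a \<noteq> 0")
      case False
      then show ?thesis using vw by simp
    next
      case True
      from lp_of_comb[OF popP nP n, of "\<lambda>j. Q $$ (b,j) - P $$ (b,j)" w] vw True
      obtain a where a: "a < k" and t: "tc n (\<lambda>j. Q $$ (b,j) - P $$ (b,j)) (LP a + n * degree (w a)) \<noteq> 0"
        unfolding k_def LP_def by auto
      define N where "N = LP a + n * degree (w a)"
      have Nm: "N mod n = LP a mod n" and Nd: "N div n \<ge> LP a div n" unfolding N_def using n by simp_all
      have "tc n (\<lambda>j. Q $$ (b,j) - P $$ (b,j)) N = coeff (Q $$ (b, LP a mod n)) (N div n) - coeff (P $$ (b, LP a mod n)) (N div n)"
        unfolding tc_def Nm by (simp add: coeff_diff)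
      also have "\<dots> = 0" using coeq[OF a b Nd] by simp
      finally show ?thesis using t unfolding N_def by simp
    qed
  qed
  show "Q = P"
  proof (rule eq_matI)
    show "dim_row Q = dim_row P" using kl k_def l_def by simp
    show "dim_col Q = dim_col P" using nP nQ by simp
    fix i j assume "i < dim_row P" "j < dim_col P"
    then show "Q $$ (i, j) = P $$ (i, j)" using rows[of i] nP k_def by simp
  qed
qed



lemma popov_form_props:
  fixes A :: "'a::field poly mat"
  assumes A: "A \<in> carrier_mat m n" and n: "n > 0" and fr: "full_row_rank A"
  shows "popov_form A \<in> carrier_mat m n \<and> is_popov (popov_form A) \<and> mat_deg (popov_form A) \<le> mat_deg A"
proof -
  obtain P where P: "P \<in> carrier_mat m n" "is_popov P" "row_module P = row_module A" "mat_deg P \<le> mat_deg A"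
    using popov_exists[OF A n fr] by blast
  have "popov_form A = P" unfolding popov_form_def
  proof (rule the_equality)
    show "dim_col P = dim_col A \<and> is_popov P \<and> row_module P = row_module A" using P A by auto
    fix Q assume Q: "dim_col Q = dim_col A \<and> is_popov Q \<and> row_module Q = row_module A"
    show "Q = P" using popov_unique[OF P(2), of Q n] Q P A n by auto
  qed
  then show ?thesis using P by simp
qed

lemma append_rows_index:
  assumes A: "A \<in> carrier_mat nr1 nc" and B: "B \<in> carrier_mat nr2 nc" and i: "i < nr1 + nr2" and j: "j < nc"
  shows "(A @\<^sub>r B) $$ (i,j) = (if i < nr1 then A $$ (i,j) else B $$ (i - nr1, j))"
  unfolding append_rows_def using A B i j by (subst index_mat_four_block) auto

definition indep :: "nat \<Rightarrow> nat \<Rightarrow> (nat \<Rightarrow> nat \<Rightarrow> 'a::comm_ring_1) \<Rightarrow> bool" where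
  "indep s n R \<longleftrightarrow> (\<forall>u. (\<forall>j<n. (\<Sum>b<s. R b j * u b) = 0) \<longrightarrow> (\<forall>b<s. u b = 0))"

lemma indep_cong: "(\<And>b j. b < s \<Longrightarrow> j < n \<Longrightarrow> R b j = R' b j) \<Longrightarrow> indep s n R = indep s n R'"
  unfolding indep_def by simp

lemma fr_indep: "full_row_rank M = indep (dim_row M) (dim_col M) (\<lambda>b j. M $$ (b,j))"
  unfolding fr_iff indep_def by simp

lemma indep_row_nz:
  fixes R :: "nat \<Rightarrow> nat \<Rightarrow> 'a::field"
  assumes "indep s n R" "i < s" shows "\<exists>j<n. R i j \<noteq> 0"
proof (rule ccontr)
  assume "\<not> ?thesis"
  then have z: "\<forall>j<n. R i j = 0" by auto
  have "\<forall>j<n. (\<Sum>b<s. R b j * (if b = i then 1 else 0)) = 0"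
  proof (intro allI impI)
    fix j assume j: "j < n"
    have "(\<Sum>b<s. R b j * (if b = i then 1 else 0)) = R i j * 1" by (rule sum_delta_mult[OF assms(2)])
    then show "(\<Sum>b<s. R b j * (if b = i then 1 else 0)) = 0" using z j by simp
  qed
  then have "\<forall>b<s. (if b = i then 1 else 0 :: 'a) = 0"
    using assms(1)[unfolded indep_def, THEN spec[where x="\<lambda>b. if b = i then (1::'a) else 0"]] by blast
  then show False using assms(2) by (metis one_neq_zero)
qed

lemma echelon_indep:
  fixes R :: "nat \<Rightarrow> nat \<Rightarrow> 'a::field"
  assumes inc: "\<And>a b. a < b \<Longrightarrow> b < s \<Longrightarrow> \<pi> a < \<pi> b" and pn: "\<And>a. a < s \<Longrightarrow> \<pi> a < n"
    and piv: "\<And>a. a < s \<Longrightarrow> R a (\<pi> a) \<noteq> 0" and right: "\<And>a j. a < s \<Longrightarrow> \<pi> a < j \<Longrightarrow> j < n \<Longrightarrow> R a j = 0"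
  shows "indep s n R"
  unfolding indep_def
proof (intro allI impI)
  fix u b assume h: "\<forall>j<n. (\<Sum>b<s. R b j * u b) = 0" and b: "b < s"
  show "u b = 0"
  proof (rule ccontr)
    assume ub: "u b \<noteq> 0"
    define T where "T = {a. a < s \<and> u a \<noteq> 0}"
    have fT: "finite T" "T \<noteq> {}" unfolding T_def using b ub by auto
    define a0 where "a0 = Max T"
    have a0: "a0 \<in> T" unfolding a0_def using Max_in[OF fT] .
    have ge: "\<And>a. a \<in> T \<Longrightarrow> a \<le> a0" unfolding a0_def using Max_ge[OF fT(1)] by blast
    have a0s: "a0 < s" "u a0 \<noteq> 0" using a0 unfolding T_def by auto
    have "(\<Sum>a<s. R a (\<pi> a0) * u a) = (\<Sum>a<s. if a = a0 then R a0 (\<pi> a0) * u a0 else 0)"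
    proof (rule sum.cong[OF refl])
      fix a assume a: "a \<in> {..<s}"
      show "R a (\<pi> a0) * u a = (if a = a0 then R a0 (\<pi> a0) * u a0 else 0)"
      proof (cases "a = a0")
        case True then show ?thesis by simp
      next
        case False
        show ?thesis
        proof (cases "a < a0")
          case True
          then have "\<pi> a < \<pi> a0" using inc a0s by simp
          then show ?thesis using right[of a "\<pi> a0"] a pn[OF a0s(1)] False by simp
        next
          case F2: False
          then have "a > a0" using False by simp
          then have "a \<notin> T" using ge not_le by blast
          then show ?thesis using a False unfolding T_def by simp
        qed
      qed
    qed
    also have "\<dots> = R a0 (\<pi> a0) * u a0" using a0s by (simp add: sum.delta')
    also have "\<dots> \<noteq> 0" using piv[OF a0s(1)] a0s(2) by simp
    finally show False using h pn[OF a0s(1)] by simp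
  qed
qed

lemma popov_lm_echelon:
  fixes P :: "'a::field poly mat"
  assumes pop: "is_popov P" and n: "dim_col P = n" "n > 0"
  shows "\<And>a. a < dim_row P \<Longrightarrow> lead_mat P $$ (a, lp n (rw P a) mod n) = 1"
    "\<And>a j. a < dim_row P \<Longrightarrow> lp n (rw P a) mod n < j \<Longrightarrow> j < n \<Longrightarrow> lead_mat P $$ (a, j) = 0"
    "\<And>a b. a < b \<Longrightarrow> b < dim_row P \<Longrightarrow> lp n (rw P a) mod n < lp n (rw P b) mod n"
proof -
  note F = popov_facts[OF pop n]
  have lm: "lead_mat P $$ (a, j) = tc n (rw P a) (lp n (rw P a) div n * n + j)" if "a < dim_row P" "j < n" for a j
    unfolding lead_mat_def using that F(2)[of a] n by (simp add: tc_at)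
  show "lead_mat P $$ (a, lp n (rw P a) mod n) = 1" if a: "a < dim_row P" for a
    using lm[OF a] F(4)[OF a a, of "lp n (rw P a) div n"] n unfolding tc_def by simp
  show "lead_mat P $$ (a, j) = 0" if a: "a < dim_row P" and j: "lp n (rw P a) mod n < j" "j < n" for a j
  proof -
    have "lp n (rw P a) div n * n + j > lp n (rw P a)" using j by (metis add_less_cancel_left div_mult_mod_eq)
    then show ?thesis using lm[OF a j(2)] F(1)[OF a] unfolding bnd_def by simp
  qed
  show "\<And>a b. a < b \<Longrightarrow> b < dim_row P \<Longrightarrow> lp n (rw P a) mod n < lp n (rw P b) mod n" by (rule F(3))
qed



lemma row_deg_eq:
  assumes "dim_col M = dim_col M'" "\<And>j. j < dim_col M \<Longrightarrow> M $$ (i,j) = M' $$ (i',j)"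
  shows "row_deg M i = row_deg M' i'"
proof -
  have "{degree (M $$ (i, j)) |j. j < dim_col M} = {degree (M' $$ (i', j)) |j. j < dim_col M'}"
    using assms by (auto, metis)
  then show ?thesis unfolding row_deg_def by simp
qed

lemma completion_crit:
  fixes A :: "'a::field poly mat" and L :: "'a mat"
  assumes A: "A \<in> carrier_mat m n" and mn: "m < n" and fr: "full_row_rank A"
    and L: "L \<in> carrier_mat (n - m) n"
    and ind: "indep n n (\<lambda>b j. if b < m then lead_mat (popov_form A) $$ (b,j) else L $$ (b - m, j))"
  shows "is_completion A (xpow_smult (mat_deg A + 1) L)"
proof -
  define P where "P = popov_form A"
  define D where "D = mat_deg A"
  define C where "C = xpow_smult (D + 1) L"
  have n: "n > 0" using mn by simp
  have P: "P \<in> carrier_mat m n" "is_popov P" "mat_deg P \<le> D"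
    using popov_form_props[OF A n fr] unfolding P_def D_def by auto
  have dA: "dim_row A = m" "dim_col A = n" using A by auto
  have Cc: "C \<in> carrier_mat (n - m) n" unfolding C_def xpow_smult_def using L by auto
  have Ci: "C $$ (i,j) = monom (L $$ (i,j)) (D + 1)" if "i < n - m" "j < n" for i j
    unfolding C_def xpow_smult_def using L that by simp
  have Lnz: "\<exists>j<n. L $$ (i,j) \<noteq> 0" if i: "i < n - m" for i
  proof -
    have "m + i < n" using i by simp
    from indep_row_nz[OF ind this] show ?thesis by simp
  qed
  have rdC: "row_deg C i = D + 1" if i: "i < n - m" for i
    unfolding row_deg_def
  proof (rule Max_eqI)
    show "finite ({degree (C $$ (i, j)) |j. j < dim_col C} \<union> {0})" by simp
    show "y \<le> D + 1" if "y \<in> {degree (C $$ (i, j)) |j. j < dim_col C} \<union> {0}" for y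
      using that Cc Ci[OF i] by (auto simp: degree_monom_le)
    obtain j where j: "j < n" "L $$ (i,j) \<noteq> 0" using Lnz[OF i] by blast
    then have "degree (C $$ (i,j)) = D + 1" using Ci[OF i j(1)] by (simp add: degree_monom_eq)
    then show "D + 1 \<in> {degree (C $$ (i, j)) |j. j < dim_col C} \<union> {0}" using j Cc by force
  qed
  define PC where "PC = P @\<^sub>r C"
  have PCc: "PC \<in> carrier_mat n n" unfolding PC_def using carrier_append_rows[OF P(1) Cc] mn by simp
  have PCi: "PC $$ (i,j) = (if i < m then P $$ (i,j) else C $$ (i - m, j))" if "i < n" "j < n" for i j
    unfolding PC_def using append_rows_index[OF P(1) Cc, of i j] that mn by simp
  have rdPC: "row_deg PC i = (if i < m then row_deg P i else row_deg C (i - m))" if i: "i < n" for i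
  proof (cases "i < m")
    case True then show ?thesis using row_deg_eq[of PC P i i] PCi PCc P(1) i by simp
  next
    case False then show ?thesis using row_deg_eq[of PC C i "i - m"] PCi PCc Cc i by simp
  qed
  have lmPC: "lead_mat PC $$ (b,j) = (if b < m then lead_mat P $$ (b,j) else L $$ (b - m, j))" if b: "b < n" and j: "j < n" for b j
  proof (cases "b < m")
    case True
    then show ?thesis unfolding lead_mat_def using PCc P(1) b j PCi rdPC by simp
  next
    case False
    then have bm: "b - m < n - m" using b by simp
    show ?thesis unfolding lead_mat_def using PCc b j PCi rdPC False rdC[OF bm] Ci[OF bm j] by simp
  qed
  have dl: "dim_row (lead_mat PC) = n" "dim_col (lead_mat PC) = n" using PCc unfolding lead_mat_def by auto
  have "indep n n (\<lambda>b j. lead_mat PC $$ (b,j)) = indep n n (\<lambda>b j. if b < m then lead_mat P $$ (b,j) else L $$ (b - m, j))"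
    by (rule indep_cong) (rule lmPC)
  then have fr': "full_row_rank (lead_mat PC)" unfolding fr_indep dl using ind unfolding P_def by simp
  have nzr: "no_zero_row PC" unfolding no_zero_row_def zero_row_def
  proof (intro allI impI)
    fix i assume i: "i < dim_row PC"
    then have i': "i < n" using PCc by simp
    show "\<not> (\<forall>j<dim_col PC. PC $$ (i, j) = 0)"
    proof (cases "i < m")
      case True
      then have "\<not> zero_row P i" using P(2) P(1) unfolding is_popov_def no_zero_row_def by auto
      then show ?thesis unfolding zero_row_def using PCi i' True PCc P(1) by auto
    next
      case False
      then have im: "i - m < n - m" using i' by simp
      obtain j where j: "j < n" "L $$ (i - m, j) \<noteq> 0" using Lnz[OF im] by blast
      then have "PC $$ (i,j) \<noteq> 0" using PCi[OF i' j(1)] False Ci[OF im j(1)] by simp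
      then show ?thesis using j PCc by auto
    qed
  qed
  have rr: "row_reduced PC" unfolding row_reduced_def using PCc nzr fr' by simp
  have "\<forall>i<dim_row C. row_deg C i > mat_deg P" using rdC Cc P(3) by simp
  then show ?thesis unfolding is_completion_def Let_def using Cc rr dA
    unfolding P_def[symmetric] D_def[symmetric] C_def[symmetric] PC_def by simp
qed



lemma homog:
  fixes R :: "nat \<Rightarrow> nat \<Rightarrow> 'a::field"
  shows "finite J \<Longrightarrow> card J > s \<Longrightarrow> \<exists>w. (\<exists>j\<in>J. w j \<noteq> 0) \<and> (\<forall>b<s. (\<Sum>j\<in>J. R b j * w j) = 0)"
proof (induction s arbitrary: J R)
  case 0
  then obtain j0 where "j0 \<in> J" by (metis card.empty card_gt_0_iff ex_in_conv)
  then show ?case by (intro exI[where x="\<lambda>j. 1"]) auto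
next
  case (Suc s)
  show ?case
  proof (cases "\<forall>j\<in>J. R s j = 0")
    case True
    from Suc.IH[OF Suc.prems(1), of R] Suc.prems(2) obtain w where
      w: "\<exists>j\<in>J. w j \<noteq> 0" "\<forall>b<s. (\<Sum>j\<in>J. R b j * w j) = 0" by auto
    have "\<forall>b<Suc s. (\<Sum>j\<in>J. R b j * w j) = 0"
      using w(2) True by (auto simp: less_Suc_eq)
    then show ?thesis using w(1) by blast
  next
    case False
    then obtain j1 where j1: "j1 \<in> J" "R s j1 \<noteq> 0" by blast
    define J' where "J' = J - {j1}"
    have fJ': "finite J'" "card J' > s" unfolding J'_def using Suc.prems j1 by auto
    define R' where "R' = (\<lambda>b j. R b j - R b j1 * R s j / R s j1)"
    from Suc.IH[OF fJ', of R'] obtain w' where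
      w': "\<exists>j\<in>J'. w' j \<noteq> 0" "\<forall>b<s. (\<Sum>j\<in>J'. R' b j * w' j) = 0" by auto
    define w where "w = w'(j1 := - (\<Sum>j\<in>J'. R s j * w' j) / R s j1)"
    have wJ': "\<And>j. j \<in> J' \<Longrightarrow> w j = w' j" unfolding w_def J'_def by auto
    have split: "(\<Sum>j\<in>J. f j) = f j1 + (\<Sum>j\<in>J'. f j)" for f :: "nat \<Rightarrow> 'a"
      unfolding J'_def using j1 Suc.prems(1) by (simp add: sum.remove)
    have swJ: "(\<Sum>j\<in>J'. R b j * w j) = (\<Sum>j\<in>J'. R b j * w' j)" for b
      by (rule sum.cong) (simp_all add: wJ')
    have wj1: "w j1 = - (\<Sum>j\<in>J'. R s j * w' j) / R s j1" unfolding w_def by simp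
    have eqs: "(\<Sum>j\<in>J. R s j * w j) = 0"
      unfolding split swJ wj1 using j1(2) by (simp add: field_simps)
    have eqb: "(\<Sum>j\<in>J. R b j * w j) = 0" if b: "b < s" for b
    proof -
      have "(\<Sum>j\<in>J'. R' b j * w' j) = (\<Sum>j\<in>J'. R b j * w' j) - R b j1 / R s j1 * (\<Sum>j\<in>J'. R s j * w' j)"
        unfolding R'_def by (simp add: algebra_simps sum_subtractf sum_distrib_left)
      moreover have "(\<Sum>j\<in>J. R b j * w j) = R b j1 * w j1 + (\<Sum>j\<in>J'. R b j * w' j)"
        unfolding split swJ by simp
      moreover have "(\<Sum>j\<in>J'. R' b j * w' j) = 0" using w'(2) b by simp
      ultimately show ?thesis unfolding wj1 using j1(2) by (simp add: field_simps)
    qed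
    have "\<forall>b<Suc s. (\<Sum>j\<in>J. R b j * w j) = 0" using eqs eqb by (auto simp: less_Suc_eq)
    moreover have "\<exists>j\<in>J. w j \<noteq> 0"
    proof -
      obtain j where j: "j \<in> J'" "w' j \<noteq> 0" using w'(1) by blast
      then have "w j \<noteq> 0" "j \<in> J" using wJ'[OF j(1)] unfolding J'_def by auto
      then show ?thesis by blast
    qed
    ultimately show ?thesis by blast
  qed
qed

definition addx :: "nat \<Rightarrow> (nat \<Rightarrow> nat \<Rightarrow> 'a) \<Rightarrow> (nat \<Rightarrow> 'a) \<Rightarrow> nat \<Rightarrow> nat \<Rightarrow> 'a" where
  "addx s R x = (\<lambda>b j. if b < s then R b j else x j)"

lemma bad_char:
  fixes R :: "nat \<Rightarrow> nat \<Rightarrow> 'a::field"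
  assumes ind: "indep s n R" and nind: "\<not> indep (Suc s) n (addx s R x)"
  shows "\<exists>a. \<forall>j<n. x j = (\<Sum>b<s. R b j * a b)"
proof -
  obtain u where u: "\<forall>j<n. (\<Sum>b<Suc s. addx s R x b j * u b) = 0" and ub: "\<exists>b<Suc s. u b \<noteq> 0"
    using nind unfolding indep_def by blast
  have us: "\<forall>j<n. (\<Sum>b<s. R b j * u b) + x j * u s = 0"
    using u unfolding addx_def by (simp add: lessThan_Suc sum.insert add.commute)
  have "u s \<noteq> 0"
  proof
    assume "u s = 0"
    then have "\<forall>j<n. (\<Sum>b<s. R b j * u b) = 0" using us by simp
    then have "\<forall>b<s. u b = 0" using ind unfolding indep_def by blast
    then show False using ub \<open>u s = 0\<close> by (auto simp: less_Suc_eq)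
  qed
  have "\<forall>j<n. x j = (\<Sum>b<s. R b j * (- u b / u s))"
  proof (intro allI impI)
    fix j assume j: "j < n"
    have "(\<Sum>b<s. R b j * (- u b / u s)) = - (\<Sum>b<s. R b j * u b) / u s"
      by (simp add: sum_divide_distrib sum_negf)
    also have "\<dots> = x j"
    proof -
      have "(\<Sum>b<s. R b j * u b) = - (x j * u s)" using us j by (simp add: eq_neg_iff_add_eq_0)
      then show ?thesis using \<open>u s \<noteq> 0\<close> by simp
    qed
    finally show "x j = (\<Sum>b<s. R b j * (- u b / u s))" by simp
  qed
  then show ?thesis by (rule exI[where x="\<lambda>b. - u b / u s"])
qed

definition goodx :: "'a set \<Rightarrow> nat \<Rightarrow> nat \<Rightarrow> (nat \<Rightarrow> nat \<Rightarrow> 'a::field) \<Rightarrow> (nat \<Rightarrow> 'a) set" where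
  "goodx S n s R = {x \<in> PiE {..<n} (\<lambda>_. S). indep (Suc s) n (addx s R x)}"

lemma card_PiE_const: "finite A \<Longrightarrow> card (PiE A (\<lambda>_. S)) = card S ^ card A"
  by (simp add: card_PiE)

lemma bad_general:
  fixes R :: "nat \<Rightarrow> nat \<Rightarrow> 'a::field"
  assumes ind: "indep s n R" and sn: "s < n" and S: "finite S"
  shows "card {x \<in> PiE {..<n} (\<lambda>_. S). \<not> indep (Suc s) n (addx s R x)} \<le> card S ^ (n - 1)"
proof -
  obtain w where w: "\<exists>j\<in>{..<n}. w j \<noteq> 0" "\<forall>b<s. (\<Sum>j\<in>{..<n}. R b j * w j) = 0"
    using homog[of "{..<n}" s R] sn by auto
  obtain j0 where j0: "j0 < n" "w j0 \<noteq> 0" using w(1) by auto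
  define Z where "Z = {x \<in> PiE {..<n} (\<lambda>_. S). (\<Sum>j<n. x j * w j) = 0}"
  have sub: "{x \<in> PiE {..<n} (\<lambda>_. S). \<not> indep (Suc s) n (addx s R x)} \<subseteq> Z"
  proof
    fix x assume x: "x \<in> {x \<in> PiE {..<n} (\<lambda>_. S). \<not> indep (Suc s) n (addx s R x)}"
    then obtain a where a: "\<forall>j<n. x j = (\<Sum>b<s. R b j * a b)" using bad_char[OF ind] by blast
    have "(\<Sum>j<n. x j * w j) = (\<Sum>j<n. \<Sum>b<s. R b j * a b * w j)" using a by (simp add: sum_distrib_right)
    also have "\<dots> = (\<Sum>b<s. \<Sum>j<n. R b j * a b * w j)" by (rule sum.swap)
    also have "\<dots> = (\<Sum>b<s. a b * (\<Sum>j<n. R b j * w j))" by (simp add: sum_distrib_left algebra_simps)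
    also have "\<dots> = 0" using w(2) by simp
    finally show "x \<in> Z" using x unfolding Z_def by simp
  qed
  have inj: "inj_on (\<lambda>x. restrict x ({..<n} - {j0})) Z"
  proof (rule inj_onI)
    fix x y assume x: "x \<in> Z" and y: "y \<in> Z" and e: "restrict x ({..<n} - {j0}) = restrict y ({..<n} - {j0})"
    have oth: "\<And>j. j < n \<Longrightarrow> j \<noteq> j0 \<Longrightarrow> x j = y j" using e by (metis Diff_iff lessThan_iff restrict_apply' singletonD)
    have sp: "(\<Sum>j<n. f j) = f j0 + (\<Sum>j\<in>{..<n} - {j0}. f j)" for f :: "nat \<Rightarrow> 'a"
      using j0 by (simp add: sum.remove)
    have "x j0 * w j0 = y j0 * w j0"
    proof -
      have "x j0 * w j0 + (\<Sum>j\<in>{..<n} - {j0}. x j * w j) = 0" using x sp[of "\<lambda>j. x j * w j"] unfolding Z_def by simp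
      moreover have "y j0 * w j0 + (\<Sum>j\<in>{..<n} - {j0}. y j * w j) = 0" using y sp[of "\<lambda>j. y j * w j"] unfolding Z_def by simp
      moreover have "(\<Sum>j\<in>{..<n} - {j0}. x j * w j) = (\<Sum>j\<in>{..<n} - {j0}. y j * w j)"
        by (rule sum.cong) (auto simp: oth)
      ultimately show ?thesis by (metis add_right_cancel)
    qed
    then have "x j0 = y j0" using j0 by simp
    then have "\<And>j. j \<in> {..<n} \<Longrightarrow> x j = y j" using oth by (metis lessThan_iff)
    then show "x = y" using x y unfolding Z_def by (intro PiE_ext[of x "{..<n}" "\<lambda>_. S"]) auto
  qed
  have img: "(\<lambda>x. restrict x ({..<n} - {j0})) ` Z \<subseteq> PiE ({..<n} - {j0}) (\<lambda>_. S)"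
  proof
    fix y assume "y \<in> (\<lambda>x. restrict x ({..<n} - {j0})) ` Z"
    then obtain x where x: "x \<in> Z" "y = restrict x ({..<n} - {j0})" by blast
    have "\<forall>i\<in>{..<n} - {j0}. x i \<in> S" using x(1) unfolding Z_def by (auto dest: PiE_mem)
    then show "y \<in> PiE ({..<n} - {j0}) (\<lambda>_. S)" using x(2) by (simp add: restrict_PiE_iff)
  qed
  have "card Z \<le> card (PiE ({..<n} - {j0}) (\<lambda>_. S))"
    using card_inj_on_le[OF inj img] S by (simp add: finite_PiE)
  also have "\<dots> = card S ^ (n - 1)" using j0 by (simp add: card_PiE_const)
  finally have "card Z \<le> card S ^ (n - 1)" .
  moreover have "finite Z" unfolding Z_def using S by (simp add: finite_PiE)
  ultimately show ?thesis using card_mono[OF _ sub] by (meson le_trans)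
qed

lemma bad_univ:
  fixes R :: "nat \<Rightarrow> nat \<Rightarrow> 'a::field"
  assumes ind: "indep s n R" and fin: "finite (UNIV :: 'a set)"
  shows "card {x \<in> PiE {..<n} (\<lambda>_. UNIV :: 'a set). \<not> indep (Suc s) n (addx s R x)} \<le> card (UNIV :: 'a set) ^ s"
proof -
  define g where "g = (\<lambda>a. restrict (\<lambda>j. \<Sum>b<s. R b j * a b) {..<n})"
  have sub: "{x \<in> PiE {..<n} (\<lambda>_. UNIV :: 'a set). \<not> indep (Suc s) n (addx s R x)} \<subseteq> g ` PiE {..<s} (\<lambda>_. UNIV)"
  proof
    fix x assume x: "x \<in> {x \<in> PiE {..<n} (\<lambda>_. UNIV :: 'a set). \<not> indep (Suc s) n (addx s R x)}"
    then obtain a where a: "\<forall>j<n. x j = (\<Sum>b<s. R b j * a b)" using bad_char[OF ind] by blast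
    have "x = g (restrict a {..<s})"
    proof (rule PiE_ext[of x "{..<n}" "\<lambda>_. UNIV"])
      show "x \<in> PiE {..<n} (\<lambda>_. UNIV)" using x by simp
      show "g (restrict a {..<s}) \<in> PiE {..<n} (\<lambda>_. UNIV)" unfolding g_def by simp
      fix j assume "j \<in> {..<n}"
      then show "x j = g (restrict a {..<s}) j" unfolding g_def using a by simp
    qed
    moreover have "restrict a {..<s} \<in> PiE {..<s} (\<lambda>_. UNIV)" by simp
    ultimately show "x \<in> g ` PiE {..<s} (\<lambda>_. UNIV)" by blast
  qed
  have "card (g ` PiE {..<s} (\<lambda>_. (UNIV :: 'a set))) \<le> card (PiE {..<s} (\<lambda>_. (UNIV :: 'a set)))"
    by (rule card_image_le) (simp add: finite_PiE fin)
  also have "\<dots> = card (UNIV :: 'a set) ^ s" by (simp add: card_PiE_const)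
  finally show ?thesis using card_mono[OF _ sub] fin by (meson finite_PiE finite_imageI finite_lessThan le_trans)
qed

lemma card_goodx:
  fixes R :: "nat \<Rightarrow> nat \<Rightarrow> 'a::field"
  assumes S: "finite S"
  shows "card (goodx S n s R) = card S ^ n - card {x \<in> PiE {..<n} (\<lambda>_. S). \<not> indep (Suc s) n (addx s R x)}"
proof -
  let ?A = "PiE {..<n} (\<lambda>_. S)"
  have fA: "finite ?A" using S by (simp add: finite_PiE)
  have "?A = goodx S n s R \<union> {x \<in> ?A. \<not> indep (Suc s) n (addx s R x)}" unfolding goodx_def by auto
  moreover have "goodx S n s R \<inter> {x \<in> ?A. \<not> indep (Suc s) n (addx s R x)} = {}" unfolding goodx_def by auto
  ultimately have "card ?A = card (goodx S n s R) + card {x \<in> ?A. \<not> indep (Suc s) n (addx s R x)}"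
    using fA by (metis (no_types, lifting) card_Un_disjoint finite_Un)
  moreover have "card ?A = card S ^ n" by (simp add: card_PiE_const)
  ultimately show ?thesis by simp
qed



definition ext :: "nat \<Rightarrow> (nat \<Rightarrow> nat \<Rightarrow> 'a) \<Rightarrow> (nat \<times> nat \<Rightarrow> 'a) \<Rightarrow> nat \<Rightarrow> nat \<Rightarrow> 'a" where
  "ext k B f = (\<lambda>b j. if b < k then B b j else f (b - k, j))"

definition G :: "'a set \<Rightarrow> nat \<Rightarrow> nat \<Rightarrow> (nat \<Rightarrow> nat \<Rightarrow> 'a::field) \<Rightarrow> nat \<Rightarrow> (nat \<times> nat \<Rightarrow> 'a) set" where
  "G S n k B r = {f \<in> PiE ({..<r} \<times> {..<n}) (\<lambda>_. S). indep (k + r) n (ext k B f)}"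

definition comb :: "nat \<Rightarrow> nat \<Rightarrow> (nat \<times> nat \<Rightarrow> 'a) \<Rightarrow> (nat \<Rightarrow> 'a) \<Rightarrow> nat \<times> nat \<Rightarrow> 'a" where
  "comb r n f x = (\<lambda>(i,j). if i < r \<and> j < n then f (i,j) else if i = r \<and> j < n then x j else undefined)"

lemma count:
  fixes B :: "nat \<Rightarrow> nat \<Rightarrow> 'a::field" and \<beta> :: "nat \<Rightarrow> real"
  assumes S: "finite S" and indB: "indep k n B"
    and H: "\<And>s R. k \<le> s \<Longrightarrow> s < n \<Longrightarrow> indep s n R \<Longrightarrow> real (card (goodx S n s R)) \<ge> real (card S) ^ n - \<beta> s"
    and nn: "\<And>s. \<beta> s \<le> real (card S) ^ n"
  shows "k + r \<le> n \<Longrightarrow> real (card (G S n k B r)) \<ge> (\<Prod>t<r. real (card S) ^ n - \<beta> (k + t))"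
proof (induction r)
  case 0
  have "G S n k B 0 = {\<lambda>_. undefined}"
  proof -
    have "PiE ({..<0::nat} \<times> {..<n}) (\<lambda>_. S) = {\<lambda>_. undefined}" by simp
    moreover have "indep (k + 0) n (ext k B (\<lambda>_. undefined))"
    proof -
      have "indep k n (ext k B (\<lambda>_. undefined)) = indep k n B" by (rule indep_cong) (simp add: ext_def)
      then show ?thesis using indB by simp
    qed
    ultimately show ?thesis unfolding G_def by auto
  qed
  then show ?case by simp
next
  case (Suc r)
  let ?q = "real (card S)"
  let ?Gr = "G S n k B r"
  let ?Good = "\<lambda>f. goodx S n (k + r) (ext k B f)"
  have IH: "real (card ?Gr) \<ge> (\<Prod>t<r. ?q ^ n - \<beta> (k + t))" using Suc by simp
  have fdom: "finite ({..<Suc r} \<times> {..<n})" by simp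
  have fG: "finite (G S n k B (Suc r))" unfolding G_def using S by (simp add: finite_PiE)
  have fGr: "finite ?Gr" unfolding G_def using S by (simp add: finite_PiE)
  have fGood: "\<And>f. finite (?Good f)" unfolding goodx_def using S by (simp add: finite_PiE)
  have inj: "inj_on (\<lambda>(f,x). comb r n f x) (Sigma ?Gr ?Good)"
  proof (rule inj_onI, clarify)
    fix f x f' x' assume f: "f \<in> ?Gr" and x: "x \<in> ?Good f" and f': "f' \<in> ?Gr" and x': "x' \<in> ?Good f'"
      and e: "comb r n f x = comb r n f' x'"
    have fP: "f \<in> PiE ({..<r} \<times> {..<n}) (\<lambda>_. S)" "f' \<in> PiE ({..<r} \<times> {..<n}) (\<lambda>_. S)"
      using f f' unfolding G_def by auto
    have xP: "x \<in> PiE {..<n} (\<lambda>_. S)" "x' \<in> PiE {..<n} (\<lambda>_. S)" using x x' unfolding goodx_def by auto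
    have "f = f'"
    proof (rule PiE_ext[OF fP])
      fix p assume p: "p \<in> {..<r} \<times> {..<n}"
      obtain i j where "p = (i,j)" by fastforce
      then show "f p = f' p" using p fun_cong[OF e, of p] unfolding comb_def by auto
    qed
    moreover have "x = x'"
    proof (rule PiE_ext[OF xP])
      fix j assume j: "j \<in> {..<n}"
      then show "x j = x' j" using fun_cong[OF e, of "(r,j)"] unfolding comb_def by auto
    qed
    ultimately show "f = f' \<and> x = x'" by simp
  qed
  have img: "(\<lambda>(f,x). comb r n f x) ` Sigma ?Gr ?Good \<subseteq> G S n k B (Suc r)"
  proof clarify
    fix f x assume f: "f \<in> ?Gr" and x: "x \<in> ?Good f"
    have fP: "f \<in> PiE ({..<r} \<times> {..<n}) (\<lambda>_. S)" and fi: "indep (k + r) n (ext k B f)" using f unfolding G_def by auto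
    have xP: "x \<in> PiE {..<n} (\<lambda>_. S)" and xi: "indep (Suc (k + r)) n (addx (k + r) (ext k B f) x)"
      using x unfolding goodx_def by auto
    have "comb r n f x \<in> PiE ({..<Suc r} \<times> {..<n}) (\<lambda>_. S)"
      unfolding PiE_iff comb_def
    proof (intro conjI ballI)
      fix p assume "p \<in> {..<Suc r} \<times> {..<n}"
      then obtain i j where p: "p = (i,j)" "i < Suc r" "j < n" by auto
      show "(case p of (i, j) \<Rightarrow> if i < r \<and> j < n then f (i, j) else if i = r \<and> j < n then x j else undefined) \<in> S"
      proof (cases "i < r")
        case True then show ?thesis using p PiE_mem[OF fP, of "(i,j)"] by simp
      next
        case False then have "i = r" using p by simp
        then show ?thesis using p PiE_mem[OF xP, of j] by simp
      qed
    next
      show "(\<lambda>(i, j). if i < r \<and> j < n then f (i, j) else if i = r \<and> j < n then x j else undefined) \<in> extensional ({..<Suc r} \<times> {..<n})"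
        unfolding extensional_def by auto
    qed
    moreover have "indep (k + Suc r) n (ext k B (comb r n f x))"
    proof -
      have "indep (k + Suc r) n (ext k B (comb r n f x)) = indep (Suc (k + r)) n (addx (k + r) (ext k B f) x)"
        by (simp, rule indep_cong) (auto simp: ext_def addx_def comb_def)
      then show ?thesis using xi by simp
    qed
    ultimately show "comb r n f x \<in> G S n k B (Suc r)" unfolding G_def by simp
  qed
  have "card (Sigma ?Gr ?Good) \<le> card (G S n k B (Suc r))"
    using card_inj_on_le[OF inj img fG] .
  moreover have "card (Sigma ?Gr ?Good) = (\<Sum>f\<in>?Gr. card (?Good f))" using fGr fGood by simp
  ultimately have c1: "real (card (G S n k B (Suc r))) \<ge> (\<Sum>f\<in>?Gr. real (card (?Good f)))"
    by (metis of_nat_le_iff of_nat_sum)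
  have kr: "k + r < n" using Suc.prems by simp
  have "(\<Sum>f\<in>?Gr. real (card (?Good f))) \<ge> (\<Sum>f\<in>?Gr. ?q ^ n - \<beta> (k + r))"
  proof (rule sum_mono)
    fix f assume "f \<in> ?Gr"
    then have "indep (k + r) n (ext k B f)" unfolding G_def by simp
    then show "?q ^ n - \<beta> (k + r) \<le> real (card (?Good f))" using H[of "k + r"] kr by simp
  qed
  then have c2: "real (card (G S n k B (Suc r))) \<ge> real (card ?Gr) * (?q ^ n - \<beta> (k + r))"
    using c1 by (simp add: mult.commute)
  have "(\<Prod>t<Suc r. ?q ^ n - \<beta> (k + t)) = (\<Prod>t<r. ?q ^ n - \<beta> (k + t)) * (?q ^ n - \<beta> (k + r))"
    by simp
  also have "\<dots> \<le> real (card ?Gr) * (?q ^ n - \<beta> (k + r))"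
    using IH nn[of "k + r"] by (intro mult_right_mono) auto
  finally show ?case using c2 by simp
qed



lemma reindex_rev: "(\<Prod>t<(r::nat). g (r - t)) = (\<Prod>i\<in>{1..r}. (g i :: real))"
proof (rule prod.reindex_bij_betw)
  show "bij_betw (\<lambda>t. r - t) {..<r} {1..r}"
    by (rule bij_betw_byWitness[where f'="\<lambda>i. r - i"]) auto
qed

lemma ratio_prod:
  fixes Qn :: real and \<beta> :: "nat \<Rightarrow> real"
  assumes "Qn > 0"
  shows "(\<Prod>t<r. Qn - \<beta> t) / Qn ^ r = (\<Prod>t<r. 1 - \<beta> t / Qn)"
proof -
  have "(\<Prod>t<r. 1 - \<beta> t / Qn) = (\<Prod>t<r. (Qn - \<beta> t) / Qn)"
    using assms by (intro prod.cong) (auto simp: field_simps)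
  also have "\<dots> = (\<Prod>t<r. Qn - \<beta> t) / (\<Prod>t<r. Qn)" by (rule prod_dividef)
  also have "(\<Prod>t<r. Qn) = Qn ^ r" by simp
  finally show ?thesis by simp
qed

theorem lemma3p3:
  fixes A :: "'a::field poly mat" and S :: "'a set" and m n :: nat
  assumes "A \<in> carrier_mat m n" and "m < n" and "full_row_rank A"
    and "finite S" and "S \<noteq> {}"
  defines "q \<equiv> card S"
    and "good \<equiv> {L \<in> mats_over S (n - m) n. is_completion A (xpow_smult (mat_deg A + 1) L)}"
  shows "(finite (UNIV :: 'a set) \<and> S = UNIV \<longrightarrow>
            real (card good) / real (card (mats_over S (n - m) n))
              \<ge> (\<Prod>i = 1..n - m. 1 - 1 / real q ^ i))
       \<and> real (card good) / real (card (mats_over S (n - m) n)) \<ge> 1 - real (n - m) / real q"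
proof -
  note A = assms(1) and mn = assms(2) and fr = assms(3) and S = assms(4) and Sne = assms(5)
  have n: "n > 0" using mn by simp
  define P where "P = popov_form A"
  have P: "P \<in> carrier_mat m n" "is_popov P" using popov_form_props[OF A n fr] unfolding P_def by auto
  have dP: "dim_row P = m" "dim_col P = n" using P(1) by auto
  define B where "B = (\<lambda>b j. lead_mat P $$ (b,j))"
  note E = popov_lm_echelon[OF P(2) dP(2) n, unfolded dP]
  have indB: "indep m n B" unfolding B_def
    by (rule echelon_indep[where \<pi>="\<lambda>a. lp n (rw P a) mod n"]) (use E n in auto)
  define r where "r = n - m"
  have mr: "m + r = n" unfolding r_def using mn by simp
  define dom where "dom = {..<r} \<times> {..<n}"
  define \<phi> where "\<phi> = (\<lambda>f. mat r n f :: 'a mat)"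
  have q1: "q \<ge> 1" unfolding q_def using S Sne by (simp add: Suc_le_eq card_gt_0_iff)
  have injphi: "inj_on \<phi> (PiE dom (\<lambda>_. S))"
  proof (rule inj_onI)
    fix f g assume f: "f \<in> PiE dom (\<lambda>_. S)" and g: "g \<in> PiE dom (\<lambda>_. S)" and e: "\<phi> f = \<phi> g"
    show "f = g"
    proof (rule PiE_ext[OF f g])
      fix p assume p: "p \<in> dom"
      obtain i j where "p = (i,j)" "i < r" "j < n" using p unfolding dom_def by auto
      then show "f p = g p" using arg_cong[OF e, of "\<lambda>M. M $$ (i,j)"] unfolding \<phi>_def by simp
    qed
  qed
  have mo: "mats_over S r n = \<phi> ` PiE dom (\<lambda>_. S)"
  proof
    show "mats_over S r n \<subseteq> \<phi> ` PiE dom (\<lambda>_. S)"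
    proof
      fix L assume L: "L \<in> mats_over S r n"
      define f where "f = restrict (\<lambda>(i,j). L $$ (i,j)) dom"
      have "f \<in> PiE dom (\<lambda>_. S)" using L unfolding f_def dom_def mats_over_def by (auto simp: restrict_PiE_iff)
      moreover have "\<phi> f = L" using L unfolding \<phi>_def f_def mats_over_def dom_def by (intro eq_matI) auto
      ultimately show "L \<in> \<phi> ` PiE dom (\<lambda>_. S)" by blast
    qed
    show "\<phi> ` PiE dom (\<lambda>_. S) \<subseteq> mats_over S r n"
      unfolding \<phi>_def mats_over_def dom_def by (auto dest: PiE_mem)
  qed
  have fdom: "finite dom" "card dom = r * n" unfolding dom_def by (simp_all add: card_cartesian_product)
  have cardmo: "card (mats_over S r n) = q ^ (r * n)"
    unfolding mo card_image[OF injphi] using fdom by (simp add: card_PiE_const q_def)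
  have fmo: "finite (mats_over S r n)" unfolding mo using S fdom by (simp add: finite_PiE)
  have Gsub: "\<phi> ` G S n m B r \<subseteq> good"
  proof
    fix L assume "L \<in> \<phi> ` G S n m B r"
    then obtain f where f: "f \<in> G S n m B r" "L = \<phi> f" by blast
    have fP: "f \<in> PiE dom (\<lambda>_. S)" and fi: "indep (m + r) n (ext m B f)" using f(1) unfolding G_def dom_def by auto
    have Lm: "L \<in> mats_over S r n" unfolding mo using f fP by blast
    have Lc: "L \<in> carrier_mat (n - m) n" unfolding f(2) \<phi>_def r_def by simp
    have "indep n n (\<lambda>b j. if b < m then lead_mat (popov_form A) $$ (b,j) else L $$ (b - m, j)) = indep (m + r) n (ext m B f)"
      unfolding mr by (rule indep_cong) (use mr in \<open>auto simp: ext_def B_def P_def f(2) \<phi>_def\<close>)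
    then have "is_completion A (xpow_smult (mat_deg A + 1) L)" using completion_crit[OF A mn fr Lc] fi by simp
    then show "L \<in> good" using Lm unfolding good_def r_def by simp
  qed
  have fgood: "finite good" unfolding good_def using fmo r_def by simp
  have injG: "inj_on \<phi> (G S n m B r)" using injphi by (rule inj_on_subset) (auto simp: G_def dom_def)
  have cg: "card (G S n m B r) \<le> card good"
    using card_mono[OF fgood Gsub] card_image[OF injG] by simp
  have qpos: "real q > 0" using q1 by simp
  define Qn where "Qn = real q ^ n"
  have Qn: "Qn > 0" unfolding Qn_def using qpos by simp
  have den: "real (card (mats_over S (n - m) n)) = Qn ^ r"
    unfolding r_def[symmetric] cardmo Qn_def by (simp add: power_mult mult.commute)
  have main: "real (card good) / real (card (mats_over S (n - m) n)) \<ge> (\<Prod>t<r. 1 - \<beta> (m + t) / Qn)"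
    if H: "\<And>s R. m \<le> s \<Longrightarrow> s < n \<Longrightarrow> indep s n R \<Longrightarrow> real (card (goodx S n s R)) \<ge> real (card S) ^ n - \<beta> s"
      and nn: "\<And>s. \<beta> s \<le> real (card S) ^ n" for \<beta> :: "nat \<Rightarrow> real"
  proof -
    have "(\<Prod>t<r. Qn - \<beta> (m + t)) \<le> real (card (G S n m B r))"
      using count[OF S indB H nn, of r] mr unfolding Qn_def q_def by simp
    also have "\<dots> \<le> real (card good)" using cg by simp
    finally have "(\<Prod>t<r. Qn - \<beta> (m + t)) / Qn ^ r \<le> real (card good) / Qn ^ r"
      using Qn by (intro divide_right_mono) auto
    then show ?thesis unfolding den ratio_prod[OF Qn] .
  qed
  have bad_le: "card {x \<in> PiE {..<n} (\<lambda>_. S). \<not> indep (Suc s) n (addx s R x)} \<le> q ^ n" for s R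
  proof -
    have "card {x \<in> PiE {..<n} (\<lambda>_. S). \<not> indep (Suc s) n (addx s R x)} \<le> card (PiE {..<n} (\<lambda>_. S))"
      using S by (intro card_mono) (auto simp: finite_PiE)
    then show ?thesis by (simp add: card_PiE_const q_def)
  qed
  have cgx: "real (card (goodx S n s R)) = real q ^ n - real (card {x \<in> PiE {..<n} (\<lambda>_. S). \<not> indep (Suc s) n (addx s R x)})" for s R
    using card_goodx[OF S, of n s R] bad_le[of s R] unfolding q_def by (simp add: of_nat_diff)
  have gen: "real (card good) / real (card (mats_over S (n - m) n)) \<ge> 1 - real (n - m) / real q"
  proof -
    have H: "real (card (goodx S n s R)) \<ge> real (card S) ^ n - real q ^ (n - 1)" if "s < n" "indep s n R" for s R
      using cgx[of s R] bad_general[OF that(2) that(1) S] unfolding q_def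
      by (simp add: of_nat_le_iff[symmetric] del: of_nat_le_iff)
    have nn: "real q ^ (n - 1) \<le> real (card S) ^ n" unfolding q_def[symmetric]
      using q1 by (intro power_increasing) auto
    have "real (card good) / real (card (mats_over S (n - m) n)) \<ge> (\<Prod>t<r. 1 - real q ^ (n - 1) / Qn)"
      by (rule main[where \<beta>="\<lambda>_. real q ^ (n - 1)"]) (use H nn in auto)
    moreover have "real q ^ (n - 1) / Qn = 1 / real q"
    proof -
      have sn: "Suc (n - 1) = n" using n by simp
      have "Qn = real q * real q ^ (n - 1)" unfolding Qn_def using power_Suc[of "real q" "n - 1"] sn by simp
      then show ?thesis using qpos by simp
    qed
    moreover have "(\<Prod>t<r. 1 - 1 / real q) = (1 + (- 1 / real q)) ^ r" by simp
    moreover have "1 + real r * (- 1 / real q) \<le> (1 + (- 1 / real q)) ^ r"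
      by (rule Bernoulli_inequality) (use q1 in \<open>simp add: field_simps\<close>)
    ultimately show ?thesis unfolding r_def by (simp add: field_simps)
  qed
  have fin: "real (card good) / real (card (mats_over S (n - m) n)) \<ge> (\<Prod>i = 1..n - m. 1 - 1 / real q ^ i)"
    if U: "finite (UNIV :: 'a set)" "S = UNIV"
  proof -
    have H: "real (card (goodx S n s R)) \<ge> real (card S) ^ n - real q ^ s" if "indep s n R" for s R
      using cgx[of s R] bad_univ[OF that U(1)] U(2) unfolding q_def
      by (simp add: of_nat_le_iff[symmetric] del: of_nat_le_iff)
    define \<beta> where "\<beta> = (\<lambda>s. if s < n then real q ^ s else 0)"
    have m1: "real (card good) / real (card (mats_over S (n - m) n)) \<ge> (\<Prod>t<r. 1 - \<beta> (m + t) / Qn)"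
    proof (rule main)
      fix s and R :: "nat \<Rightarrow> nat \<Rightarrow> 'a" assume "m \<le> s" "s < n" "indep s n R"
      then show "real (card S) ^ n - \<beta> s \<le> real (card (goodx S n s R))" using H unfolding \<beta>_def by simp
    next
      fix s show "\<beta> s \<le> real (card S) ^ n" unfolding \<beta>_def q_def[symmetric] using q1
        by (auto intro: power_increasing)
    qed
    have "(\<Prod>t<r. 1 - \<beta> (m + t) / Qn) = (\<Prod>t<r. 1 - real q ^ (m + t) / Qn)"
      by (rule prod.cong) (use mr in \<open>auto simp: \<beta>_def\<close>)
    then have "real (card good) / real (card (mats_over S (n - m) n)) \<ge> (\<Prod>t<r. 1 - real q ^ (m + t) / Qn)"
      using m1 by simp
    moreover have "(\<Prod>t<r. 1 - real q ^ (m + t) / Qn) = (\<Prod>t<r. 1 - 1 / real q ^ (r - t))"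
    proof (rule prod.cong[OF refl])
      fix t assume t: "t \<in> {..<r}"
      have "Qn = real q ^ (m + t) * real q ^ (r - t)" unfolding Qn_def
        using t mr by (simp add: power_add[symmetric])
      then show "1 - real q ^ (m + t) / Qn = 1 - 1 / real q ^ (r - t)" using qpos by simp
    qed
    moreover have "(\<Prod>t<r. 1 - 1 / real q ^ (r - t)) = (\<Prod>i\<in>{1..r}. 1 - 1 / real q ^ i)"
      by (rule reindex_rev[where g="\<lambda>i. 1 - 1 / real q ^ i"])
    ultimately show ?thesis unfolding r_def by simp
  qed
  show ?thesis using gen fin by blast
qed

end
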